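(* Let $\mathcal{S}$ be finite, $\Pi$ irreducible stochastic on $\mathcal{S}$, $\kappa(x,y):=\pi_{xy}-\mathbf{1}_{x=y}$, $Q=(q(y))$ the invariant distribution, $\widehat\kappa(x,y):=q(y)\kappa(y,x)/q(x)$. Let $X(t)=Z_{N(t)}$ be the continuous-time chain built from a Markov chain $(Z_n)$ with transition matrix $\Pi$ and initial law with positive entries, and an independent rate-one Poisson process $N$; $\mathbb{P}$ is the underlying measure, $\ell(t,y):=\mathbb{P}(X(t)=y)/q(y)$, and $\mathbb{Q}$ is a measure under which $X$ has the same dynamics but initial law $Q$. Fix $T\in(0,\infty)$, $\widehat X(s):=X(T-s)$, $\widehat{\mathcal{G}}(s):=\sigma(\widehat X(u),0\le u\le s)$. Let $\Psi(r):=r\log r-r+1$ for $r>0$ and $$\Lambda^{\mathbb{P}}(t,x):=\sum_{y\neq x}\widehat\kappa(x,y)\,\Psi\!\Big(\frac{\ell(t,y)}{\ell(t,x)}\Big)\ge0,\qquad \Lambda^{\mathbb{Q}}(t,x):=\ell(t,x)\Lambda^{\mathbb{P}}(t,x)\ge0 .$$ Then $$\ell(T-s,\widehat X(s))\log\ell(T-s,\widehat X(s))-\int_0^s\Lambda^{\mathbb{Q}}(T-u,\widehat X(u))\,\mathrm{d}u,\qquad0\le s\le T,$$ is a $(\widehat{\mathcal{G}},\mathbb{Q})$-martingale, and $$\log\ell(T-s,\widehat X(s))-\int_0^s\Lambda^{\mathbb{P}}(T-u,\widehat X(u))\,\mathrm{d}u,\qquad0\le s\le T,$$ is a $(\widehat{\mathcal{G}},\mathbb{P})$-martingale.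 *)

theory Defs
  imports "HOL-Probability.Probability"
begin

fun mat_pow :: "('s::finite \<Rightarrow> 's \<Rightarrow> real) \<Rightarrow> nat \<Rightarrow> 's \<Rightarrow> 's \<Rightarrow> real" where
  "mat_pow P 0 x y = (if x = y then 1 else 0)"
| "mat_pow P (Suc n) x y = (\<Sum>z\<in>UNIV. mat_pow P n x z * P z y)"

definition stochastic :: "('s::finite \<Rightarrow> 's \<Rightarrow> real) \<Rightarrow> bool" where
  "stochastic P \<longleftrightarrow> (\<forall>x y. 0 \<le> P x y) \<and> (\<forall>x. (\<Sum>y\<in>UNIV. P x y) = 1)"

definition irreducible_chain :: "('s::finite \<Rightarrow> 's \<Rightarrow> real) \<Rightarrow> bool" where
  "irreducible_chain P \<longleftrightarrow> (\<forall>x y. \<exists>n. mat_pow P n x y > 0)"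

definition invariant_distribution :: "('s::finite \<Rightarrow> 's \<Rightarrow> real) \<Rightarrow> ('s \<Rightarrow> real) \<Rightarrow> bool" where
  "invariant_distribution P q \<longleftrightarrow> (\<forall>x. 0 \<le> q x) \<and> (\<Sum>x\<in>UNIV. q x) = 1
     \<and> (\<forall>y. (\<Sum>x\<in>UNIV. q x * P x y) = q y)"

definition kappa :: "('s \<Rightarrow> 's \<Rightarrow> real) \<Rightarrow> 's \<Rightarrow> 's \<Rightarrow> real" where
  "kappa P x y = P x y - (if x = y then 1 else 0)"

definition kappa_hat :: "('s \<Rightarrow> 's \<Rightarrow> real) \<Rightarrow> ('s \<Rightarrow> real) \<Rightarrow> 's \<Rightarrow> 's \<Rightarrow> real" where
  "kappa_hat P q x y = q y * kappa P y x / q x"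

definition markov_chain :: "'w measure \<Rightarrow> (nat \<Rightarrow> 'w \<Rightarrow> 's::finite) \<Rightarrow> ('s \<Rightarrow> 's \<Rightarrow> real)
    \<Rightarrow> ('s \<Rightarrow> real) \<Rightarrow> bool" where
  "markov_chain M Z P mu \<longleftrightarrow>
     (\<forall>n. Z n \<in> measurable M (count_space UNIV)) \<and>
     (\<forall>n (xs :: nat \<Rightarrow> 's). measure M {\<omega>\<in>space M. \<forall>i\<le>n. Z i \<omega> = xs i}
        = mu (xs 0) * (\<Prod>i<n. P (xs i) (xs (Suc i))))"

definition poisson_process1 :: "'w measure \<Rightarrow> (real \<Rightarrow> 'w \<Rightarrow> nat) \<Rightarrow> bool" where
  "poisson_process1 M N \<longleftrightarrow>
     (\<forall>t. N t \<in> measurable M (count_space UNIV)) \<and>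
     (\<forall>\<omega>\<in>space M. N 0 \<omega> = 0 \<and> mono_on {0..} (\<lambda>t. N t \<omega>) \<and>
        (\<forall>t\<ge>0. continuous (at_right t) (\<lambda>s. real (N s \<omega>)))) \<and>
     (\<forall>s t k. 0 \<le> s \<and> s \<le> t \<longrightarrow>
        measure M {\<omega>\<in>space M. N t \<omega> - N s \<omega> = k} = (t - s) ^ k / fact k * exp (-(t - s))) \<and>
     (\<forall>(ts :: nat \<Rightarrow> real) n. 0 \<le> ts 0 \<and> mono ts \<longrightarrow>
        prob_space.indep_vars M (\<lambda>_. count_space UNIV) (\<lambda>i \<omega>. N (ts (Suc i)) \<omega> - N (ts i) \<omega>) {..<n})"

definition independent_processes :: "'w measure \<Rightarrow> (nat \<Rightarrow> 'w \<Rightarrow> 's) \<Rightarrow> (real \<Rightarrow> 'w \<Rightarrow> nat) \<Rightarrow> bool" where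
  "independent_processes M Z N \<longleftrightarrow> prob_space.indep_set M
     (sets (sigma (space M) {{\<omega>\<in>space M. Z n \<omega> = x} | n x. True}))
     (sets (sigma (space M) {{\<omega>\<in>space M. N t \<omega> = k} | t k. True}))"

definition ctchain :: "(nat \<Rightarrow> 'w \<Rightarrow> 's) \<Rightarrow> (real \<Rightarrow> 'w \<Rightarrow> nat) \<Rightarrow> real \<Rightarrow> 'w \<Rightarrow> 's" where
  "ctchain Z N t \<omega> = Z (N t \<omega>) \<omega>"

definition ell :: "'w measure \<Rightarrow> (real \<Rightarrow> 'w \<Rightarrow> 's) \<Rightarrow> ('s \<Rightarrow> real) \<Rightarrow> real \<Rightarrow> 's \<Rightarrow> real" where
  "ell M X q t y = measure M {\<omega>\<in>space M. X t \<omega> = y} / q y"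

definition Psi :: "real \<Rightarrow> real" where
  "Psi r = r * ln r - r + 1"

definition LambdaP :: "('s::finite \<Rightarrow> 's \<Rightarrow> real) \<Rightarrow> ('s \<Rightarrow> real) \<Rightarrow> (real \<Rightarrow> 's \<Rightarrow> real) \<Rightarrow> real \<Rightarrow> 's \<Rightarrow> real" where
  "LambdaP P q l t x = (\<Sum>y\<in>UNIV - {x}. kappa_hat P q x y * Psi (l t y / l t x))"

definition LambdaQ :: "('s::finite \<Rightarrow> 's \<Rightarrow> real) \<Rightarrow> ('s \<Rightarrow> real) \<Rightarrow> (real \<Rightarrow> 's \<Rightarrow> real) \<Rightarrow> real \<Rightarrow> 's \<Rightarrow> real" where
  "LambdaQ P q l t x = l t x * LambdaP P q l t x"

definition nat_filtration :: "'w measure \<Rightarrow> (real \<Rightarrow> 'w \<Rightarrow> 's) \<Rightarrow> real \<Rightarrow> 'w measure" where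
  "nat_filtration M Y s = sigma (space M) {{\<omega>\<in>space M. Y u \<omega> = y} | u y. 0 \<le> u \<and> u \<le> s}"

definition martingale_on :: "'w measure \<Rightarrow> (real \<Rightarrow> 'w measure) \<Rightarrow> real set \<Rightarrow> (real \<Rightarrow> 'w \<Rightarrow> real) \<Rightarrow> bool" where
  "martingale_on M F I Y \<longleftrightarrow>
     (\<forall>s\<in>I. subalgebra M (F s)) \<and>
     (\<forall>s\<in>I. \<forall>t\<in>I. s \<le> t \<longrightarrow> sets (F s) \<subseteq> sets (F t)) \<and>
     (\<forall>s\<in>I. Y s \<in> borel_measurable (F s) \<and> integrable M (Y s)) \<and>
     (\<forall>s\<in>I. \<forall>t\<in>I. s \<le> t \<longrightarrow> (AE \<omega> in M. real_cond_exp M (F s) (Y t) \<omega> = Y s \<omega>))"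

end

theory Submission
  imports Defs
begin
locale ctmc = prob_space M for M :: "'w measure" +
  fixes P :: "'s::finite \<Rightarrow> 's \<Rightarrow> real" and q mu :: "'s \<Rightarrow> real"
    and Z :: "nat \<Rightarrow> 'w \<Rightarrow> 's" and N :: "real \<Rightarrow> 'w \<Rightarrow> nat"
  assumes stoch: "stochastic P" and irr: "irreducible_chain P"
    and inv: "invariant_distribution P q"
    and mupos: "\<forall>x. mu x > 0" and musum: "(\<Sum>x\<in>UNIV. mu x) = 1"
    and MC: "markov_chain M Z P mu" and PP: "poisson_process1 M N"
    and IND: "independent_processes M Z N"

lemma mat_pow_left: "mat_pow P (Suc n) x y = (\<Sum>z\<in>UNIV. P x z * mat_pow P n z y)"
proof (induction n arbitrary: x y)
  case 0
  have "(\<Sum>z\<in>UNIV. (if x = z then 1 else 0) * P z y) = (\<Sum>z\<in>UNIV. if x = z then P z y else 0)"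
    by (rule sum.cong) auto
  moreover have "(\<Sum>z\<in>UNIV. P x z * (if z = y then 1 else 0)) = (\<Sum>z\<in>UNIV. if y = z then P x z else 0)"
    by (rule sum.cong) auto
  ultimately show ?case by simp
next
  case (Suc n)
  have "mat_pow P (Suc (Suc n)) x y = (\<Sum>z\<in>UNIV. (\<Sum>w\<in>UNIV. P x w * mat_pow P n w z) * P z y)"
    using Suc by simp
  also have "\<dots> = (\<Sum>w\<in>UNIV. P x w * (\<Sum>z\<in>UNIV. mat_pow P n w z * P z y))"
    unfolding sum_distrib_left sum_distrib_right mult.assoc by (rule sum.swap)
  finally show ?case by simp
qed

lemma measurable_map_list:
  fixes f :: "'i \<Rightarrow> 'w \<Rightarrow> 'a::countable"
  assumes "\<And>i. f i \<in> measurable S (count_space UNIV)"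
  shows "(\<lambda>\<omega>. map (\<lambda>i. f i \<omega>) xs) \<in> measurable S (count_space UNIV)"
proof (induction xs)
  case Nil
  then show ?case by simp
next
  case (Cons x xs)
  have "(\<lambda>\<omega>. (f x \<omega>, map (\<lambda>i. f i \<omega>) xs)) \<in> measurable S (count_space UNIV \<Otimes>\<^sub>M count_space UNIV)"
    using Cons assms by (intro measurable_Pair) auto
  then have "(\<lambda>\<omega>. (f x \<omega>, map (\<lambda>i. f i \<omega>) xs)) \<in> measurable S (count_space UNIV)"
    by (simp add: pair_measure_countable)
  then have "(\<lambda>p. fst p # snd p) \<circ> (\<lambda>\<omega>. (f x \<omega>, map (\<lambda>i. f i \<omega>) xs)) \<in> measurable S (count_space UNIV)"
    by (rule measurable_comp) simp
  then show ?case by (simp add: o_def)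
qed

context ctmc
begin

lemma Zmeas[measurable]: "Z n \<in> measurable M (count_space UNIV)"
  using MC unfolding markov_chain_def by auto

definition zev :: "nat \<Rightarrow> 's list set \<Rightarrow> 'w set" where
  "zev k B = {\<omega>\<in>space M. map (\<lambda>j. Z j \<omega>) [0..<Suc k] \<in> B}"

definition pp :: "'s list \<Rightarrow> real" where
  "pp zs = mu (zs!0) * (\<Prod>i<length zs - 1. P (zs!i) (zs!(Suc i)))"

lemma zev_sets[measurable]: "zev k B \<in> sets M"
proof -
  have "(\<lambda>\<omega>. map (\<lambda>j. Z j \<omega>) [0..<Suc k]) \<in> measurable M (count_space UNIV)"
    by (rule measurable_map_list) simp
  then have "(\<lambda>\<omega>. map (\<lambda>j. Z j \<omega>) [0..<Suc k]) -` B \<inter> space M \<in> sets M"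
    by (rule measurable_sets) simp
  then show ?thesis unfolding zev_def by (simp add: Int_def vimage_def conj_commute)
qed

lemma meas_single: assumes "length zs = Suc k" shows "measure M (zev k {zs}) = pp zs"
proof -
  have e: "map (\<lambda>j. Z j \<omega>) [0..<Suc k] = zs \<longleftrightarrow> (\<forall>i\<le>k. Z i \<omega> = zs!i)" for \<omega>
    using assms unfolding list_eq_iff_nth_eq by (auto simp del: upt_Suc simp add: less_Suc_eq_le)
  have "zev k {zs} = {\<omega>\<in>space M. \<forall>i\<le>k. Z i \<omega> = (\<lambda>i. zs!i) i}"
    unfolding zev_def using e by blast
  then show ?thesis using MC assms unfolding markov_chain_def pp_def by simp
qed

lemma finite_len: "finite {zs::'s list. length zs = n}"
  using finite_lists_length_eq[of "UNIV::'s set" n] by simp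

lemma meas_zev: assumes "\<forall>zs\<in>B. length zs = Suc k"
  shows "measure M (zev k B) = (\<Sum>zs\<in>B. pp zs)"
proof -
  have "B \<subseteq> {zs::'s list. length zs = Suc k}" using assms by blast
  then have fin: "finite B" using finite_len by (rule finite_subset)
  have eq: "zev k B = (\<Union>zs\<in>B. zev k {zs})" unfolding zev_def by blast
  have disj: "disjoint_family_on (\<lambda>zs. zev k {zs}) B"
    unfolding disjoint_family_on_def zev_def by blast
  have "measure M (\<Union>zs\<in>B. zev k {zs}) = (\<Sum>zs\<in>B. measure M (zev k {zs}))"
    by (rule measure_finite_Union[OF fin _ disj]) auto
  also have "\<dots> = (\<Sum>zs\<in>B. pp zs)"
    using assms by (intro sum.cong refl meas_single) auto
  finally show ?thesis using eq by simp
qed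

lemma pp_snoc: assumes "length zs = Suc k" shows "pp (zs@[w]) = pp zs * P (last zs) w"
proof -
  have "(\<Prod>i<Suc k. P ((zs@[w])!i) ((zs@[w])!(Suc i))) = (\<Prod>i<k. P (zs!i) (zs!(Suc i))) * P (zs!k) w"
    using assms by (simp add: nth_append)
  moreover have "(zs@[w])!0 = zs!0" using assms by (simp add: nth_append)
  moreover have "last zs = zs!k" using assms by (cases zs rule: rev_cases) (auto simp: nth_append)
  ultimately show ?thesis using assms unfolding pp_def by simp
qed

lemma snoc_img: "(xs @ [a] \<in> (\<lambda>zs. zs @ [w]) ` B) \<longleftrightarrow> (a = w \<and> xs \<in> B)"
  by auto

lemma zev_Suc: "\<omega> \<in> zev (Suc k) ((\<lambda>zs. zs @ [w]) ` B) \<longleftrightarrow> \<omega> \<in> zev k B \<and> Z (Suc k) \<omega> = w"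
proof -
  have e: "map (\<lambda>j. Z j \<omega>) [0..<Suc (Suc k)] = map (\<lambda>j. Z j \<omega>) [0..<Suc k] @ [Z (Suc k) \<omega>]"
    by (simp del: upt_Suc add: upt_Suc_append)
  show ?thesis unfolding zev_def mem_Collect_eq e snoc_img by blast
qed

lemma zev_last: "\<forall>zs\<in>B. last zs = x \<Longrightarrow> \<omega> \<in> zev k B \<Longrightarrow> Z k \<omega> = x"
proof -
  assume a: "\<forall>zs\<in>B. last zs = x" "\<omega> \<in> zev k B"
  then have "last (map (\<lambda>j. Z j \<omega>) [0..<Suc k]) = x" unfolding zev_def by auto
  then show "Z k \<omega> = x" by (simp del: upt_Suc add: upt_Suc_append)
qed

lemma markov_step:
  assumes "\<forall>zs\<in>B. length zs = Suc k \<and> last zs = x"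
  shows "measure M (zev k B \<inter> {\<omega>\<in>space M. Z (k+d) \<omega> = y}) = measure M (zev k B) * mat_pow P d x y"
  using assms
proof (induction d arbitrary: k B x)
  case 0
  have l: "\<And>\<omega>. \<omega> \<in> zev k B \<Longrightarrow> Z k \<omega> = x" using 0 zev_last by blast
  show ?case
  proof (cases "x = y")
    case True
    then have "zev k B \<inter> {\<omega>\<in>space M. Z (k+0) \<omega> = y} = zev k B" using l unfolding zev_def by auto
    then show ?thesis using True by simp
  next
    case False
    then have "zev k B \<inter> {\<omega>\<in>space M. Z (k+0) \<omega> = y} = {}" using l by auto
    then show ?thesis using False by simp
  qed
next
  case (Suc d)
  define Bw where "Bw w = (\<lambda>zs. zs@[w]) ` B" for w
  have eq: "zev k B \<inter> {\<omega>\<in>space M. Z (k+Suc d) \<omega> = y} =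
     (\<Union>w\<in>UNIV. zev (Suc k) (Bw w) \<inter> {\<omega>\<in>space M. Z (Suc k + d) \<omega> = y})"
    by (auto simp: Bw_def zev_Suc)
  have disj: "disjoint_family_on (\<lambda>w. zev (Suc k) (Bw w) \<inter> {\<omega>\<in>space M. Z (Suc k + d) \<omega> = y}) UNIV"
    unfolding disjoint_family_on_def by (auto simp: Bw_def zev_Suc)
  have "measure M (\<Union>w\<in>UNIV. zev (Suc k) (Bw w) \<inter> {\<omega>\<in>space M. Z (Suc k + d) \<omega> = y})
      = (\<Sum>w\<in>UNIV. measure M (zev (Suc k) (Bw w) \<inter> {\<omega>\<in>space M. Z (Suc k + d) \<omega> = y}))"
    by (rule measure_finite_Union[OF _ _ disj]) auto
  also have "\<dots> = (\<Sum>w\<in>UNIV. measure M (zev (Suc k) (Bw w)) * mat_pow P d w y)"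
    using Suc.prems by (intro sum.cong refl Suc.IH) (auto simp: Bw_def)
  also have "\<dots> = (\<Sum>w\<in>UNIV. measure M (zev k B) * P x w * mat_pow P d w y)"
  proof (intro sum.cong refl)
    fix w
    have "measure M (zev (Suc k) (Bw w)) = (\<Sum>zs\<in>Bw w. pp zs)"
      using Suc.prems by (intro meas_zev) (auto simp: Bw_def)
    also have "\<dots> = (\<Sum>zs\<in>B. pp (zs@[w]))"
      unfolding Bw_def by (rule sum.reindex_cong[where l="\<lambda>zs. zs@[w]"]) (auto simp: inj_on_def)
    also have "\<dots> = (\<Sum>zs\<in>B. pp zs * P x w)"
      using Suc.prems by (intro sum.cong refl) (simp add: pp_snoc)
    also have "\<dots> = measure M (zev k B) * P x w"
      using Suc.prems by (simp add: meas_zev sum_distrib_right)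
    finally show "measure M (zev (Suc k) (Bw w)) * mat_pow P d w y = measure M (zev k B) * P x w * mat_pow P d w y"
      by simp
  qed
  also have "\<dots> = measure M (zev k B) * mat_pow P (Suc d) x y"
    by (simp only: mat_pow_left sum_distrib_left mult.assoc)
  finally show ?case using eq by simp
qed

end

lemma meas_gen:
  fixes f :: "'w \<Rightarrow> 'a::countable"
  assumes "G \<subseteq> Pow \<Omega>" "\<And>a. {\<omega>\<in>\<Omega>. f \<omega> = a} \<in> G"
  shows "f \<in> measurable (sigma \<Omega> G) (count_space UNIV)"
proof -
  have "f -` {a} \<inter> space (sigma \<Omega> G) \<in> sets (sigma \<Omega> G)" for a
  proof -
    have "f -` {a} \<inter> space (sigma \<Omega> G) = {\<omega>\<in>\<Omega>. f \<omega> = a}" using assms(1) by auto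
    moreover have "{\<omega>\<in>\<Omega>. f \<omega> = a} \<in> sets (sigma \<Omega> G)" using assms by auto
    ultimately show ?thesis by simp
  qed
  then show ?thesis unfolding measurable_count_space_eq2_countable by auto
qed

lemma nat_incr_eq:
  fixes f g :: "nat \<Rightarrow> nat"
  assumes "f 0 = g 0" "\<And>i. i < n \<Longrightarrow> f i \<le> f (Suc i)" "\<And>i. i < n \<Longrightarrow> g i \<le> g (Suc i)"
  shows "(\<forall>j\<le>n. f j = g j) \<longleftrightarrow> (\<forall>i<n. f (Suc i) - f i = g (Suc i) - g i)"
  using assms
proof (induction n)
  case 0
  then show ?case by simp
next
  case (Suc n)
  have IH: "(\<forall>j\<le>n. f j = g j) \<longleftrightarrow> (\<forall>i<n. f (Suc i) - f i = g (Suc i) - g i)"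
    using Suc.prems by (intro Suc.IH) auto
  have a: "f n \<le> f (Suc n)" "g n \<le> g (Suc n)" using Suc.prems by auto
  show ?case
  proof
    assume h: "\<forall>j\<le>Suc n. f j = g j"
    then show "\<forall>i<Suc n. f (Suc i) - f i = g (Suc i) - g i"
      by (metis Suc_leI less_imp_le_nat)
  next
    assume h: "\<forall>i<Suc n. f (Suc i) - f i = g (Suc i) - g i"
    then have "\<forall>j\<le>n. f j = g j" using IH by auto
    moreover have "f (Suc n) = g (Suc n)"
      using h[rule_format, of n] calculation a by simp
    ultimately show "\<forall>j\<le>Suc n. f j = g j" by (simp add: le_Suc_eq)
  qed
qed

definition pois :: "real \<Rightarrow> nat \<Rightarrow> real" where
  "pois t k = t ^ k / fact k * exp (- t)"

lemma pois_nonneg: "0 \<le> t \<Longrightarrow> 0 \<le> pois t k"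
  unfolding pois_def by simp

lemma pois_sums: "(\<lambda>k. pois t k) sums 1"
proof -
  have "(\<lambda>n. t^n / fact n) sums exp t" using exp_converges[of t] by (simp add: divide_inverse_commute)
  then have "(\<lambda>n. t^n / fact n * exp (-t)) sums (exp t * exp (-t))" by (rule sums_mult2)
  then show ?thesis unfolding pois_def by (simp add: exp_minus)
qed

context ctmc
begin

lemma Nmeas[measurable]: "N t \<in> measurable M (count_space UNIV)"
  using PP unfolding poisson_process1_def by auto

lemma N0: "\<omega> \<in> space M \<Longrightarrow> N 0 \<omega> = 0"
  using PP unfolding poisson_process1_def by auto

lemma Nmono: assumes "\<omega> \<in> space M" "0 \<le> s" "s \<le> t" shows "N s \<omega> \<le> N t \<omega>"
proof -
  have "mono_on {0..} (\<lambda>t. N t \<omega>)" using PP assms unfolding poisson_process1_def by auto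
  then show ?thesis by (rule mono_onD) (use assms in auto)
qed

lemma Ninc: "0 \<le> s \<Longrightarrow> s \<le> t \<Longrightarrow> measure M {\<omega>\<in>space M. N t \<omega> - N s \<omega> = k} = pois (t - s) k"
  using PP unfolding poisson_process1_def pois_def by auto

lemma Nindep: "0 \<le> ts 0 \<Longrightarrow> mono ts \<Longrightarrow>
   indep_vars (\<lambda>_. count_space UNIV) (\<lambda>i \<omega>. N (ts (Suc i)) \<omega> - N (ts i) \<omega>) {..<n}"
  using PP unfolding poisson_process1_def by auto

lemma mat_pow_stoch: "0 \<le> mat_pow P d x y \<and> (\<Sum>y\<in>UNIV. mat_pow P d x y) = 1"
proof (induction d arbitrary: x y)
  case 0
  then show ?case by simp
next
  case (Suc d)
  have nn: "0 \<le> mat_pow P (Suc d) x y" using Suc stoch unfolding stochastic_def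
    by (simp add: sum_nonneg)
  have "(\<Sum>y\<in>UNIV. mat_pow P (Suc d) x y) = (\<Sum>z\<in>UNIV. mat_pow P d x z * (\<Sum>y\<in>UNIV. P z y))"
    by (simp add: sum_distrib_left) (rule sum.swap)
  also have "\<dots> = 1" using Suc stoch unfolding stochastic_def by simp
  finally show ?case using nn by simp
qed

lemma mat_pow_nonneg: "0 \<le> mat_pow P d x y" using mat_pow_stoch by blast

lemma mat_pow_le1: "mat_pow P d x y \<le> 1"
proof -
  have "mat_pow P d x y \<le> (\<Sum>y\<in>UNIV. mat_pow P d x y)"
    by (rule member_le_sum) (auto simp: mat_pow_nonneg)
  then show ?thesis using mat_pow_stoch by simp
qed

definition sigZ where "sigZ = sigma (space M) {{\<omega>\<in>space M. Z n \<omega> = x} | n x. True}"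
definition sigN where "sigN = sigma (space M) {{\<omega>\<in>space M. N t \<omega> = k} | t k. True}"

lemma Z_sigZ: "Z n \<in> measurable sigZ (count_space UNIV)"
  unfolding sigZ_def by (rule meas_gen) auto

lemma N_sigN: "N t \<in> measurable sigN (count_space UNIV)"
  unfolding sigN_def by (rule meas_gen) auto

lemma space_sigZ: "space sigZ = space M" unfolding sigZ_def by (subst space_measure_of) auto
lemma space_sigN: "space sigN = space M" unfolding sigN_def by (subst space_measure_of) auto

lemma indepZN: "a \<in> sets sigZ \<Longrightarrow> b \<in> sets sigN \<Longrightarrow> prob (a \<inter> b) = prob a * prob b"
  using IND unfolding independent_processes_def sigZ_def sigN_def
  by (metis (no_types, lifting) indep_setD)

lemma zev_sigZ: "zev k B \<in> sets sigZ"
proof -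
  have "(\<lambda>\<omega>. map (\<lambda>j. Z j \<omega>) [0..<Suc k]) \<in> measurable sigZ (count_space UNIV)"
    by (rule measurable_map_list) (rule Z_sigZ)
  then have "(\<lambda>\<omega>. map (\<lambda>j. Z j \<omega>) [0..<Suc k]) -` B \<inter> space sigZ \<in> sets sigZ"
    by (rule measurable_sets) simp
  then show ?thesis unfolding zev_def space_sigZ by (simp add: Int_def vimage_def conj_commute)
qed

lemma Zev_sigZ: "{\<omega>\<in>space M. Z n \<omega> = x} \<in> sets sigZ"
  using measurable_sets[OF Z_sigZ, of "{x}" n] space_sigZ by (simp add: vimage_def Int_def conj_commute)

definition wev :: "real list \<Rightarrow> nat list \<Rightarrow> 'w set" where
  "wev ts ns = {\<omega>\<in>space M. map (\<lambda>t. N t \<omega>) ts = ns}"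

lemma wev_sigN: "wev ts ns \<in> sets sigN"
proof -
  have "(\<lambda>\<omega>. map (\<lambda>t. N t \<omega>) ts) \<in> measurable sigN (count_space UNIV)"
    by (rule measurable_map_list) (rule N_sigN)
  then have "(\<lambda>\<omega>. map (\<lambda>t. N t \<omega>) ts) -` {ns} \<inter> space sigN \<in> sets sigN"
    by (rule measurable_sets) simp
  then show ?thesis unfolding wev_def space_sigN by (simp add: Int_def vimage_def conj_commute)
qed

lemma wev_sets[measurable]: "wev ts ns \<in> sets M"
proof -
  have "(\<lambda>\<omega>. map (\<lambda>t. N t \<omega>) ts) \<in> measurable M (count_space UNIV)"
    by (rule measurable_map_list) simp
  then have "(\<lambda>\<omega>. map (\<lambda>t. N t \<omega>) ts) -` {ns} \<inter> space M \<in> sets M"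
    by (rule measurable_sets) simp
  then show ?thesis unfolding wev_def by (simp add: Int_def vimage_def conj_commute)
qed

end

lemma sorted0_nonneg: "sorted (0#ts) \<Longrightarrow> i < length (0#ts) \<Longrightarrow> (0::real) \<le> (0#ts)!i"
  using sorted_nth_mono[of "0#ts" 0 i] by simp

context ctmc
begin

lemma wev_prod:
  assumes st: "sorted (0#ts)" and sn: "sorted (0#ns)" and len: "length ns = length ts"
  shows "prob (wev ts ns) = (\<Prod>i<length ts. pois ((0#ts)!Suc i - (0#ts)!i) ((0#ns)!Suc i - (0#ns)!i))"
proof (cases "ts = []")
  case True
  then have "wev ts ns = space M" using len unfolding wev_def by auto
  then show ?thesis using True by (simp add: prob_space)
next
  case False
  define n where "n = length ts"
  define tsf where "tsf i = (0#ts)!(min i n)" for i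
  have mono_tsf: "mono tsf"
    unfolding mono_def tsf_def n_def by (intro allI impI sorted_nth_mono[OF st]) auto
  have tsf0: "0 \<le> tsf 0" unfolding tsf_def by simp
  define inc where "inc i \<omega> = N (tsf (Suc i)) \<omega> - N (tsf i) \<omega>" for i \<omega>
  define d where "d i = (0#ns)!Suc i - (0#ns)!i" for i
  have ind: "indep_vars (\<lambda>_. count_space UNIV) inc {..<n}"
    unfolding inc_def by (rule Nindep[OF tsf0 mono_tsf])
  have nne: "{..<n} \<noteq> {}" using False n_def by auto
  have eq: "wev ts ns = (\<Inter>i\<in>{..<n}. inc i -` {d i} \<inter> space M)"
  proof (intro set_eqI iffI)
    fix \<omega> assume w: "\<omega> \<in> wev ts ns"
    then have sp: "\<omega> \<in> space M" unfolding wev_def by auto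
    define F where "F j = N ((0#ts)!j) \<omega>" for j
    define G where "G j = (0#ns)!j" for j
    have Fm: "\<And>i. i < n \<Longrightarrow> F i \<le> F (Suc i)" unfolding F_def n_def
      using sp by (intro Nmono sorted0_nonneg[OF st] sorted_nth_mono[OF st]) auto
    have Gm: "\<And>i. i < n \<Longrightarrow> G i \<le> G (Suc i)" unfolding G_def n_def
      using len by (intro sorted_nth_mono[OF sn]) auto
    have "\<forall>j\<le>n. F j = G j"
    proof (intro allI impI)
      fix j assume "j \<le> n"
      then show "F j = G j"
        using w sp N0 len unfolding wev_def F_def G_def n_def
        by (cases j) (auto simp: list_eq_iff_nth_eq)
    qed
    then have "\<forall>i<n. F (Suc i) - F i = G (Suc i) - G i"
      using nat_incr_eq[of F G n] Fm Gm sp N0 unfolding F_def G_def by simp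
    then show "\<omega> \<in> (\<Inter>i\<in>{..<n}. inc i -` {d i} \<inter> space M)"
      using sp unfolding inc_def d_def F_def G_def tsf_def by auto
  next
    fix \<omega> assume w: "\<omega> \<in> (\<Inter>i\<in>{..<n}. inc i -` {d i} \<inter> space M)"
    then have sp: "\<omega> \<in> space M" using nne by auto
    define F where "F j = N ((0#ts)!j) \<omega>" for j
    define G where "G j = (0#ns)!j" for j
    have Fm: "\<And>i. i < n \<Longrightarrow> F i \<le> F (Suc i)" unfolding F_def n_def
      using sp by (intro Nmono sorted0_nonneg[OF st] sorted_nth_mono[OF st]) auto
    have Gm: "\<And>i. i < n \<Longrightarrow> G i \<le> G (Suc i)" unfolding G_def n_def
      using len by (intro sorted_nth_mono[OF sn]) auto
    have n0: "n \<noteq> 0" using nne by auto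
    have "\<forall>i<n. inc i \<omega> = d i" using w by blast
    then have "\<forall>i<n. F (Suc i) - F i = G (Suc i) - G i"
      unfolding inc_def d_def F_def G_def tsf_def by auto
    then have "\<forall>j\<le>n. F j = G j"
      using nat_incr_eq[of F G n] Fm Gm sp N0 unfolding F_def G_def by simp
    then have "\<forall>j<n. N (ts!j) \<omega> = ns!j" unfolding F_def G_def by (metis Suc_leI nth_Cons_Suc)
    then show "\<omega> \<in> wev ts ns" using sp len unfolding wev_def n_def by (auto simp: list_eq_iff_nth_eq)
  qed
  have "prob (wev ts ns) = (\<Prod>i\<in>{..<n}. prob (inc i -` {d i} \<inter> space M))"
    unfolding eq by (rule indep_varsD_finite[OF ind nne]) auto
  also have "\<dots> = (\<Prod>i<n. pois ((0#ts)!Suc i - (0#ts)!i) ((0#ns)!Suc i - (0#ns)!i))"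
  proof (intro prod.cong refl)
    fix i assume i: "i \<in> {..<n}"
    have "inc i -` {d i} \<inter> space M = {\<omega>\<in>space M. N (tsf (Suc i)) \<omega> - N (tsf i) \<omega> = d i}"
      unfolding inc_def by auto
    moreover have "tsf (Suc i) = (0#ts)!Suc i" "tsf i = (0#ts)!i" using i unfolding tsf_def by auto
    moreover have "0 \<le> (0#ts)!i" using i n_def by (intro sorted0_nonneg[OF st]) auto
    moreover have "(0#ts)!i \<le> (0#ts)!Suc i" using i n_def by (intro sorted_nth_mono[OF st]) auto
    ultimately show "prob (inc i -` {d i} \<inter> space M) = pois ((0#ts)!Suc i - (0#ts)!i) ((0#ns)!Suc i - (0#ns)!i)"
      using Ninc unfolding d_def by simp
  qed
  finally show ?thesis unfolding n_def .
qed

end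

fun cp :: "(real \<Rightarrow> 's \<Rightarrow> 's \<Rightarrow> real) \<Rightarrow> real \<Rightarrow> 's \<Rightarrow> (real \<times> 's) list \<Rightarrow> real" where
  "cp p t0 x0 [] = 1"
| "cp p t0 x0 ((t,x)#r) = p (t - t0) x0 x * cp p t x r"

lemma cp_snoc: "cp p t0 x0 (tx@[(t,y)]) = cp p t0 x0 tx * p (t - last (t0 # map fst tx)) (last (x0 # map snd tx)) y"
  by (induction tx arbitrary: t0 x0) auto

lemma sorted_le_last: "sorted xs \<Longrightarrow> x \<in> set xs \<Longrightarrow> x \<le> last xs"
proof -
  assume s: "sorted xs" and x: "x \<in> set xs"
  then obtain i where i: "i < length xs" "x = xs!i" by (metis in_set_conv_nth)
  then have "xs \<noteq> []" by auto
  then have "last xs = xs!(length xs - 1)" by (simp add: last_conv_nth)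
  then show ?thesis using sorted_nth_mono[OF s, of i "length xs - 1"] i by simp
qed

lemma sorted_snoc_iff: "sorted (xs@[b]) \<longleftrightarrow> sorted xs \<and> (xs \<noteq> [] \<longrightarrow> last xs \<le> b)"
  by (auto simp: sorted_append dest: sorted_le_last intro: order_trans)

lemma nth_Cons_snoc: "i \<le> length xs \<Longrightarrow> (a#xs@[b])!i = (a#xs)!i"
  by (cases i) (auto simp: nth_append)

lemma nth_Cons_last: "(a#xs)!(length xs) = last (a#xs)"
  by (induction xs arbitrary: a) auto

context ctmc
begin

definition ptr :: "real \<Rightarrow> 's \<Rightarrow> 's \<Rightarrow> real" where
  "ptr t x y = (\<Sum>d. pois t d * mat_pow P d x y)"

lemma ptr_summable: "0 \<le> t \<Longrightarrow> summable (\<lambda>d. pois t d * mat_pow P d x y)"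
proof (rule summable_comparison_test[where g="pois t"])
  assume t: "0 \<le> t"
  show "\<exists>N. \<forall>n\<ge>N. norm (pois t n * mat_pow P n x y) \<le> pois t n"
    using t by (auto intro!: exI[of _ 0] mult_left_le simp: abs_mult pois_nonneg mat_pow_nonneg mat_pow_le1)
  show "summable (pois t)" using pois_sums by (rule sums_summable)
qed

definition Ev :: "'s \<Rightarrow> (real \<times> 's) list \<Rightarrow> 'w set" where
  "Ev m tx = {\<omega>\<in>space M. Z 0 \<omega> = m \<and> (\<forall>i<length tx. Z (N (fst (tx!i)) \<omega>) \<omega> = snd (tx!i))}"

definition lt :: "(real \<times> 's) list \<Rightarrow> real" where "lt tx = last (0 # map fst tx)"
definition lx :: "'s \<Rightarrow> (real \<times> 's) list \<Rightarrow> 's" where "lx m tx = last (m # map snd tx)"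

definition Cs :: "'s \<Rightarrow> (real \<times> 's) list \<Rightarrow> nat \<Rightarrow> 'w set" where
  "Cs m tx k = Ev m tx \<inter> {\<omega>\<in>space M. N (lt tx) \<omega> = k}"

definition Fin :: "(real \<times> 's) list \<Rightarrow> nat \<Rightarrow> nat list set" where
  "Fin tx k = {ns. length ns = length tx \<and> sorted (0#ns) \<and> last (0#ns) = k}"

definition Bs :: "'s \<Rightarrow> (real \<times> 's) list \<Rightarrow> nat list \<Rightarrow> nat \<Rightarrow> 's list set" where
  "Bs m tx ns k = {zs. length zs = Suc k \<and> zs!0 = m \<and> (\<forall>i<length tx. zs!(ns!i) = snd (tx!i))}"

definition piece :: "'s \<Rightarrow> (real \<times> 's) list \<Rightarrow> nat list \<Rightarrow> nat \<Rightarrow> 'w set" where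
  "piece m tx ns k = wev (map fst tx) ns \<inter> zev k (Bs m tx ns k)"

lemma Xmeas[measurable]: "(\<lambda>\<omega>. Z (N t \<omega>) \<omega>) \<in> measurable M (count_space UNIV)"
  by (rule measurable_compose_countable'[where g="N t" and I=UNIV]) auto

lemma Ev_sets[measurable]: "Ev m tx \<in> sets M"
proof -
  have m1: "(\<lambda>\<omega>. map (\<lambda>p. Z (N (fst p) \<omega>) \<omega>) tx) \<in> measurable M (count_space UNIV)"
    by (rule measurable_map_list) simp
  have "(\<lambda>\<omega>. (Z 0 \<omega>, map (\<lambda>p. Z (N (fst p) \<omega>) \<omega>) tx)) \<in> measurable M (count_space UNIV \<Otimes>\<^sub>M count_space UNIV)"
    using m1 by (intro measurable_Pair) auto
  then have m2: "(\<lambda>\<omega>. (Z 0 \<omega>, map (\<lambda>p. Z (N (fst p) \<omega>) \<omega>) tx)) \<in> measurable M (count_space UNIV)"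
    by (simp add: pair_measure_countable)
  have "(\<lambda>\<omega>. (Z 0 \<omega>, map (\<lambda>p. Z (N (fst p) \<omega>) \<omega>) tx)) -` {(m, map snd tx)} \<inter> space M \<in> sets M"
    by (rule measurable_sets[OF m2]) simp
  moreover have "(\<lambda>\<omega>. (Z 0 \<omega>, map (\<lambda>p. Z (N (fst p) \<omega>) \<omega>) tx)) -` {(m, map snd tx)} \<inter> space M = Ev m tx"
    unfolding Ev_def by (auto simp: list_eq_iff_nth_eq)
  ultimately show ?thesis by simp
qed

lemma Cs_sets[measurable]: "Cs m tx k \<in> sets M"
  unfolding Cs_def by (intro sets.Int Ev_sets) measurable

lemma piece_sets[measurable]: "piece m tx ns k \<in> sets M"
  unfolding piece_def by (intro sets.Int) auto

lemma Fin_le: "ns \<in> Fin tx k \<Longrightarrow> x \<in> set ns \<Longrightarrow> x \<le> k"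
  unfolding Fin_def using sorted_le_last[of "0#ns" x] by auto

lemma Fin_finite: "finite (Fin tx k)"
proof -
  have "Fin tx k \<subseteq> {ns. set ns \<subseteq> {..k} \<and> length ns = length tx}"
  proof
    fix ns assume a: "ns \<in> Fin tx k"
    then have "set ns \<subseteq> {..k}" using Fin_le by blast
    then show "ns \<in> {ns. set ns \<subseteq> {..k} \<and> length ns = length tx}" using a unfolding Fin_def by auto
  qed
  then show ?thesis using finite_lists_length_eq[of "{..k}" "length tx"] by (auto intro: finite_subset)
qed

lemma Bs_last: assumes "ns \<in> Fin tx k" "zs \<in> Bs m tx ns k" shows "length zs = Suc k \<and> last zs = lx m tx"
proof -
  have lz: "length zs = Suc k" and z0: "zs!0 = m" and zi: "\<forall>i<length tx. zs!(ns!i) = snd (tx!i)"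
    using assms(2) unfolding Bs_def by auto
  have lastz: "last zs = zs!k" using lz by (cases zs rule: rev_cases) (auto simp: nth_append)
  show ?thesis
  proof (cases "tx = []")
    case True
    then have "k = 0" using assms(1) unfolding Fin_def by auto
    then show ?thesis using lz lastz z0 True unfolding lx_def by simp
  next
    case False
    have ln: "length ns = length tx" "last (0#ns) = k" using assms(1) unfolding Fin_def by auto
    then have "ns \<noteq> []" using False by auto
    then have "ns!(length tx - 1) = k" using ln by (simp add: last_conv_nth)
    moreover have "zs!(ns!(length tx - 1)) = snd (tx!(length tx - 1))" using zi False by simp
    moreover have "lx m tx = snd (tx!(length tx - 1))" using False unfolding lx_def by (simp add: last_conv_nth last_map)
    ultimately show ?thesis using lz lastz by simp
  qed
qed

lemma Cs_decomp:
  assumes st: "sorted (0 # map fst tx)"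
  shows "Cs m tx k = (\<Union>ns\<in>Fin tx k. piece m tx ns k)"
proof (intro set_eqI iffI)
  fix \<omega> assume w: "\<omega> \<in> Cs m tx k"
  then have sp: "\<omega> \<in> space M" and z0: "Z 0 \<omega> = m"
    and xi: "\<forall>i<length tx. Z (N (fst (tx!i)) \<omega>) \<omega> = snd (tx!i)" and nl: "N (lt tx) \<omega> = k"
    unfolding Cs_def Ev_def by auto
  define ns where "ns = map (\<lambda>t. N t \<omega>) (map fst tx)"
  have e0: "0 # ns = map (\<lambda>t. N t \<omega>) (0 # map fst tx)" unfolding ns_def using N0[OF sp] by simp
  have nonneg: "\<And>x. x \<in> set (0 # map fst tx) \<Longrightarrow> 0 \<le> x"
    using st by (auto simp: sorted_wrt_append)
  have "sorted (0#ns)" unfolding e0 sorted_map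
    by (rule sorted_wrt_mono_rel[OF _ st]) (metis Nmono[OF sp] nonneg)
  moreover have "last (0#ns) = k" unfolding e0 using nl unfolding lt_def
    by (metis last_map list.distinct(1))
  moreover have "length ns = length tx" unfolding ns_def by simp
  ultimately have nsF: "ns \<in> Fin tx k" unfolding Fin_def by auto
  have "\<omega> \<in> wev (map fst tx) ns" unfolding wev_def ns_def using sp by simp
  moreover have "\<omega> \<in> zev k (Bs m tx ns k)"
  proof -
    have "\<And>i. i < length tx \<Longrightarrow> ns!i \<le> k" using Fin_le[OF nsF] by (simp add: ns_def)
    then have "\<forall>i<length tx. map (\<lambda>j. Z j \<omega>) [0..<Suc k] ! (ns!i) = snd (tx!i)"
      using xi by (auto simp del: upt_Suc simp: ns_def nth_upt less_Suc_eq_le)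
    then show ?thesis unfolding zev_def Bs_def using sp z0 by (auto simp del: upt_Suc)
  qed
  ultimately show "\<omega> \<in> (\<Union>ns\<in>Fin tx k. piece m tx ns k)" using nsF unfolding piece_def by auto
next
  fix \<omega> assume "\<omega> \<in> (\<Union>ns\<in>Fin tx k. piece m tx ns k)"
  then obtain ns where nsF: "ns \<in> Fin tx k" and w1: "\<omega> \<in> wev (map fst tx) ns" and w2: "\<omega> \<in> zev k (Bs m tx ns k)"
    unfolding piece_def by auto
  have sp: "\<omega> \<in> space M" using w1 unfolding wev_def by auto
  have nsi: "\<And>i. i < length tx \<Longrightarrow> N (fst (tx!i)) \<omega> = ns!i"
    using w1 unfolding wev_def by (auto simp: list_eq_iff_nth_eq)
  have le: "\<And>i. i < length tx \<Longrightarrow> ns!i \<le> k" using Fin_le[OF nsF] nsF unfolding Fin_def by auto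
  have zB: "map (\<lambda>j. Z j \<omega>) [0..<Suc k] \<in> Bs m tx ns k" using w2 unfolding zev_def by auto
  have "Z 0 \<omega> = m" using zB unfolding Bs_def by (auto simp del: upt_Suc)
  moreover have "\<forall>i<length tx. Z (N (fst (tx!i)) \<omega>) \<omega> = snd (tx!i)"
  proof (intro allI impI)
    fix i assume i: "i < length tx"
    have "map (\<lambda>j. Z j \<omega>) [0..<Suc k] ! (ns!i) = snd (tx!i)" using zB i unfolding Bs_def by auto
    then show "Z (N (fst (tx!i)) \<omega>) \<omega> = snd (tx!i)" using le[OF i] nsi[OF i]
      by (simp del: upt_Suc add: nth_upt less_Suc_eq_le)
  qed
  moreover have "N (lt tx) \<omega> = k"
  proof (cases "tx = []")
    case True
    then show ?thesis using nsF N0[OF sp] unfolding Fin_def lt_def by auto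
  next
    case False
    have ln: "length ns = length tx" "last (0#ns) = k" using nsF unfolding Fin_def by auto
    then have "ns \<noteq> []" using False by auto
    then have "ns!(length tx - 1) = k" using ln by (simp add: last_conv_nth)
    moreover have "lt tx = fst (tx!(length tx - 1))" using False unfolding lt_def by (simp add: last_conv_nth last_map)
    ultimately show ?thesis using nsi[of "length tx - 1"] False by simp
  qed
  ultimately show "\<omega> \<in> Cs m tx k" unfolding Cs_def Ev_def using sp by auto
qed

lemma piece_disj: "disjoint_family_on (\<lambda>ns. piece m tx ns k) (Fin tx k)"
  unfolding disjoint_family_on_def piece_def wev_def by auto

end

context ctmc
begin

lemma lt_nonneg: "sorted (0 # map fst tx) \<Longrightarrow> 0 \<le> lt tx"
  unfolding lt_def using sorted_le_last[of "0 # map fst tx" 0]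
  by (metis last_in_set list.distinct(1) list.set_intros(1) sorted_simps(2))

lemma sorted_snoc_tx: "sorted (0 # map fst (tx@[(t,y)])) \<longleftrightarrow> sorted (0 # map fst tx) \<and> lt tx \<le> t"
proof -
  have "0 # map fst (tx@[(t,y)]) = (0 # map fst tx) @ [t]" by simp
  then show ?thesis unfolding lt_def using sorted_snoc_iff[of "0 # map fst tx" t] by simp
qed

lemma piece_step:
  assumes nsF: "ns \<in> Fin tx k" and st: "sorted (0 # map fst tx)" and tt: "lt tx \<le> t" and kk: "k \<le> k'"
  shows "prob (piece m tx ns k \<inter> {\<omega>\<in>space M. N t \<omega> = k'} \<inter> {\<omega>\<in>space M. Z k' \<omega> = y})
       = prob (piece m tx ns k) * (pois (t - lt tx) (k'-k) * mat_pow P (k'-k) (lx m tx) y)"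
proof -
  define ts where "ts = map fst tx"
  define B where "B = Bs m tx ns k"
  have lnts: "length ns = length ts" and sn: "sorted (0#ns)" and lns: "last (0#ns) = k"
    using nsF unfolding Fin_def ts_def by auto
  have kk': "k + (k'-k) = k'" using kk by simp
  have e1: "piece m tx ns k \<inter> {\<omega>\<in>space M. N t \<omega> = k'} \<inter> {\<omega>\<in>space M. Z k' \<omega> = y}
      = (zev k B \<inter> {\<omega>\<in>space M. Z (k + (k'-k)) \<omega> = y}) \<inter> wev (ts@[t]) (ns@[k'])"
    unfolding piece_def wev_def B_def ts_def kk' by auto
  have e2: "piece m tx ns k = zev k B \<inter> wev ts ns" unfolding piece_def B_def ts_def by auto
  have i1: "prob ((zev k B \<inter> {\<omega>\<in>space M. Z (k + (k'-k)) \<omega> = y}) \<inter> wev (ts@[t]) (ns@[k']))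
     = prob (zev k B \<inter> {\<omega>\<in>space M. Z (k + (k'-k)) \<omega> = y}) * prob (wev (ts@[t]) (ns@[k']))"
    by (intro indepZN sets.Int zev_sigZ Zev_sigZ wev_sigN)
  have i2: "prob (zev k B \<inter> wev ts ns) = prob (zev k B) * prob (wev ts ns)"
    by (intro indepZN zev_sigZ wev_sigN)
  have mk: "prob (zev k B \<inter> {\<omega>\<in>space M. Z (k + (k'-k)) \<omega> = y}) = prob (zev k B) * mat_pow P (k'-k) (lx m tx) y"
    using Bs_last[OF nsF] unfolding B_def by (intro markov_step) auto
  have w: "prob (wev (ts@[t]) (ns@[k'])) = prob (wev ts ns) * pois (t - lt tx) (k'-k)"
  proof -
    define n where "n = length ts"
    have st': "sorted (0#ts)" using st unfolding ts_def by simp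
    have st2: "sorted (0#ts@[t])" using st tt unfolding ts_def
      by (metis append_Cons sorted_snoc_tx map_append list.simps(8,9) prod.sel(1))
    have sn2: "sorted (0#ns@[k'])" using sn lns kk sorted_snoc_iff[of "0#ns" k'] by simp
    have "prob (wev (ts@[t]) (ns@[k'])) = (\<Prod>i<Suc n. pois ((0#ts@[t])!Suc i - (0#ts@[t])!i) ((0#ns@[k'])!Suc i - (0#ns@[k'])!i))"
      using wev_prod[OF st2 sn2] lnts unfolding n_def by simp
    also have "\<dots> = (\<Prod>i<n. pois ((0#ts)!Suc i - (0#ts)!i) ((0#ns)!Suc i - (0#ns)!i)) * pois (t - lt tx) (k' - k)"
    proof -
      have "(\<Prod>i<n. pois ((0#ts@[t])!Suc i - (0#ts@[t])!i) ((0#ns@[k'])!Suc i - (0#ns@[k'])!i))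
          = (\<Prod>i<n. pois ((0#ts)!Suc i - (0#ts)!i) ((0#ns)!Suc i - (0#ns)!i))"
      proof (intro prod.cong refl)
        fix i assume "i \<in> {..<n}"
        then have i: "Suc i \<le> length ts" "i \<le> length ts" "Suc i \<le> length ns" "i \<le> length ns"
          using lnts unfolding n_def by auto
        show "pois ((0#ts@[t])!Suc i - (0#ts@[t])!i) ((0#ns@[k'])!Suc i - (0#ns@[k'])!i)
          = pois ((0#ts)!Suc i - (0#ts)!i) ((0#ns)!Suc i - (0#ns)!i)"
          using nth_Cons_snoc[OF i(1)] nth_Cons_snoc[OF i(2)] nth_Cons_snoc[OF i(3)] nth_Cons_snoc[OF i(4)]
          by metis
      qed
      moreover have "(0#ts@[t])!Suc n = t" "(0#ns@[k'])!Suc n = k'" using lnts unfolding n_def by (auto simp: nth_append)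
      moreover have "(0#ts@[t])!n = lt tx" using nth_Cons_snoc[of n ts 0 t] nth_Cons_last[of 0 ts]
        unfolding n_def lt_def ts_def by simp
      moreover have "(0#ns@[k'])!n = k" using nth_Cons_snoc[of n ns 0 k'] nth_Cons_last[of 0 ns] lns lnts
        unfolding n_def by simp
      ultimately show ?thesis by simp
    qed
    also have "\<dots> = prob (wev ts ns) * pois (t - lt tx) (k' - k)"
      using wev_prod[OF st' sn lnts] unfolding n_def by simp
    finally show ?thesis .
  qed
  have "prob (piece m tx ns k \<inter> {\<omega>\<in>space M. N t \<omega> = k'} \<inter> {\<omega>\<in>space M. Z k' \<omega> = y})
     = prob ((zev k B \<inter> {\<omega>\<in>space M. Z (k + (k'-k)) \<omega> = y}) \<inter> wev (ts@[t]) (ns@[k']))"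
    by (rule arg_cong[where f=prob, OF e1])
  also have "\<dots> = prob (zev k B) * mat_pow P (k'-k) (lx m tx) y * (prob (wev ts ns) * pois (t - lt tx) (k'-k))"
    by (simp only: i1 mk w)
  also have "\<dots> = prob (zev k B \<inter> wev ts ns) * (pois (t - lt tx) (k'-k) * mat_pow P (k'-k) (lx m tx) y)"
    by (simp add: i2)
  also have "\<dots> = prob (piece m tx ns k) * (pois (t - lt tx) (k'-k) * mat_pow P (k'-k) (lx m tx) y)"
    by (simp only: e2)
  finally show ?thesis .
qed

lemma Cs_step:
  assumes st: "sorted (0 # map fst tx)" and tt: "lt tx \<le> t" and kk: "k \<le> k'"
  shows "prob (Cs m tx k \<inter> {\<omega>\<in>space M. N t \<omega> = k'} \<inter> {\<omega>\<in>space M. Z k' \<omega> = y})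
       = prob (Cs m tx k) * (pois (t - lt tx) (k'-k) * mat_pow P (k'-k) (lx m tx) y)"
proof -
  let ?D = "{\<omega>\<in>space M. N t \<omega> = k'} \<inter> {\<omega>\<in>space M. Z k' \<omega> = y}"
  have e: "Cs m tx k \<inter> {\<omega>\<in>space M. N t \<omega> = k'} \<inter> {\<omega>\<in>space M. Z k' \<omega> = y}
      = (\<Union>ns\<in>Fin tx k. piece m tx ns k \<inter> {\<omega>\<in>space M. N t \<omega> = k'} \<inter> {\<omega>\<in>space M. Z k' \<omega> = y})"
    unfolding Cs_decomp[OF st] by auto
  have d2: "disjoint_family_on (\<lambda>ns. piece m tx ns k \<inter> {\<omega>\<in>space M. N t \<omega> = k'} \<inter> {\<omega>\<in>space M. Z k' \<omega> = y}) (Fin tx k)"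
    using piece_disj unfolding disjoint_family_on_def by blast
  have "prob (\<Union>ns\<in>Fin tx k. piece m tx ns k \<inter> {\<omega>\<in>space M. N t \<omega> = k'} \<inter> {\<omega>\<in>space M. Z k' \<omega> = y})
     = (\<Sum>ns\<in>Fin tx k. prob (piece m tx ns k \<inter> {\<omega>\<in>space M. N t \<omega> = k'} \<inter> {\<omega>\<in>space M. Z k' \<omega> = y}))"
    by (rule measure_finite_Union[OF Fin_finite _ d2]) auto
  also have "\<dots> = (\<Sum>ns\<in>Fin tx k. prob (piece m tx ns k) * (pois (t - lt tx) (k'-k) * mat_pow P (k'-k) (lx m tx) y))"
    by (intro sum.cong refl piece_step st tt kk)
  also have "\<dots> = prob (\<Union>ns\<in>Fin tx k. piece m tx ns k) * (pois (t - lt tx) (k'-k) * mat_pow P (k'-k) (lx m tx) y)"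
    by (subst measure_finite_Union[OF Fin_finite _ piece_disj]) (auto simp: sum_distrib_right)
  finally have r: "prob (\<Union>ns\<in>Fin tx k. piece m tx ns k \<inter> {\<omega>\<in>space M. N t \<omega> = k'} \<inter> {\<omega>\<in>space M. Z k' \<omega> = y})
    = prob (\<Union>ns\<in>Fin tx k. piece m tx ns k) * (pois (t - lt tx) (k'-k) * mat_pow P (k'-k) (lx m tx) y)" .
  show ?thesis using r by (simp only: e) (simp only: Cs_decomp[OF st])
qed

lemma Ev_snoc: "Ev m (tx@[(t,y)]) = Ev m tx \<inter> {\<omega>\<in>space M. Z (N t \<omega>) \<omega> = y}"
  unfolding Ev_def by (auto simp: nth_append less_Suc_eq)

lemma Cs_snoc_eq:
  assumes st: "sorted (0 # map fst tx)" and tt: "lt tx \<le> t"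
  shows "Cs m (tx@[(t,y)]) k' = (\<Union>k\<in>{..k'}. Cs m tx k \<inter> {\<omega>\<in>space M. N t \<omega> = k'} \<inter> {\<omega>\<in>space M. Z k' \<omega> = y})"
proof (intro set_eqI iffI)
  fix \<omega> assume w: "\<omega> \<in> Cs m (tx@[(t,y)]) k'"
  have ltt: "lt (tx@[(t,y)]) = t" unfolding lt_def by simp
  have sp: "\<omega> \<in> space M" and ev: "\<omega> \<in> Ev m tx" and zy: "Z (N t \<omega>) \<omega> = y" and nt: "N t \<omega> = k'"
    using w unfolding Cs_def Ev_snoc ltt by auto
  have "N (lt tx) \<omega> \<le> k'" using Nmono[OF sp lt_nonneg[OF st] tt] nt by simp
  then show "\<omega> \<in> (\<Union>k\<in>{..k'}. Cs m tx k \<inter> {\<omega>\<in>space M. N t \<omega> = k'} \<inter> {\<omega>\<in>space M. Z k' \<omega> = y})"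
    using sp ev zy nt unfolding Cs_def by auto
next
  fix \<omega> assume "\<omega> \<in> (\<Union>k\<in>{..k'}. Cs m tx k \<inter> {\<omega>\<in>space M. N t \<omega> = k'} \<inter> {\<omega>\<in>space M. Z k' \<omega> = y})"
  then show "\<omega> \<in> Cs m (tx@[(t,y)]) k'" unfolding Cs_def Ev_snoc lt_def by auto
qed

lemma Cs_rec:
  assumes st: "sorted (0 # map fst tx)" and tt: "lt tx \<le> t"
  shows "prob (Cs m (tx@[(t,y)]) k') = (\<Sum>k\<le>k'. prob (Cs m tx k) * (pois (t - lt tx) (k'-k) * mat_pow P (k'-k) (lx m tx) y))"
proof -
  have d: "disjoint_family_on (\<lambda>k. Cs m tx k \<inter> {\<omega>\<in>space M. N t \<omega> = k'} \<inter> {\<omega>\<in>space M. Z k' \<omega> = y}) {..k'}"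
    unfolding disjoint_family_on_def Cs_def by auto
  show ?thesis unfolding Cs_snoc_eq[OF st tt]
    by (subst measure_finite_Union[OF _ _ d]) (auto intro!: sum.cong Cs_step st tt)
qed

lemma Cs_sums: "(\<lambda>k. prob (Cs m tx k)) sums prob (Ev m tx)"
proof -
  have e: "Ev m tx = (\<Union>k. Cs m tx k)" unfolding Cs_def Ev_def by auto
  have "(\<lambda>k. prob (Cs m tx k)) sums prob (\<Union>k. Cs m tx k)"
    by (rule measure_UNION) (auto simp: disjoint_family_on_def Cs_def emeasure_finite)
  then show ?thesis using e by simp
qed

theorem fdd: "sorted (0 # map fst tx) \<Longrightarrow> prob (Ev m tx) = mu m * cp ptr 0 m tx"
proof (induction tx rule: rev_induct)
  case Nil
  have "Ev m [] = {\<omega>\<in>space M. \<forall>i\<le>0. Z i \<omega> = (\<lambda>_. m) i}" unfolding Ev_def by auto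
  moreover have "prob {\<omega>\<in>space M. \<forall>i\<le>0. Z i \<omega> = (\<lambda>_. m) i} = mu m"
    using MC[unfolded markov_chain_def, THEN conjunct2, rule_format, of 0 "\<lambda>_. m"] by simp
  ultimately show ?case by simp
next
  case (snoc p tx)
  obtain t y where p: "p = (t,y)" by (cases p)
  have st: "sorted (0 # map fst tx)" and tt: "lt tx \<le> t" using snoc.prems sorted_snoc_tx unfolding p by auto
  define a where "a k = prob (Cs m tx k)" for k
  define b where "b d = pois (t - lt tx) d * mat_pow P d (lx m tx) y" for d
  have Dn: "0 \<le> t - lt tx" using tt by simp
  have "summable (\<lambda>k. prob (Cs m tx k))" by (rule sums_summable[OF Cs_sums])
  then have sa: "summable (\<lambda>k. norm (a k))" unfolding a_def by simp
  have sb: "summable (\<lambda>k. norm (b k))" unfolding b_def using ptr_summable[OF Dn]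
    by (simp add: abs_mult pois_nonneg[OF Dn] mat_pow_nonneg)
  have "prob (Ev m (tx@[p])) = (\<Sum>k'. prob (Cs m (tx@[(t,y)]) k'))"
    using Cs_sums[of m "tx@[p]"] p by (simp add: sums_iff)
  also have "\<dots> = (\<Sum>k'. \<Sum>k\<le>k'. a k * b (k' - k))"
    unfolding Cs_rec[OF st tt] a_def b_def by simp
  also have "\<dots> = (\<Sum>k. a k) * (\<Sum>k. b k)" using Cauchy_product[OF sa sb] by simp
  also have "(\<Sum>k. a k) = prob (Ev m tx)" unfolding a_def using Cs_sums by (simp add: sums_iff)
  also have "(\<Sum>k. b k) = ptr (t - lt tx) (lx m tx) y" unfolding b_def ptr_def by simp
  finally show ?case using snoc.IH[OF st] unfolding p by (simp add: cp_snoc lt_def lx_def)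
qed

end

context ctmc
begin

definition Ex :: "real \<Rightarrow> 's \<Rightarrow> 's \<Rightarrow> real" where
  "Ex t x y = (\<Sum>n. mat_pow P n x y / fact n * t^n)"

lemma exp_abs_summable: "summable (\<lambda>n. \<bar>t\<bar>^n / fact n :: real)"
  using exp_converges[of "\<bar>t\<bar>"] by (simp add: sums_summable divide_inverse_commute)

lemma Ex_summable: "summable (\<lambda>n. mat_pow P n x y / fact n * t^n)"
proof (rule summable_comparison_test[OF _ exp_abs_summable[of t]])
  show "\<exists>N. \<forall>n\<ge>N. norm (mat_pow P n x y / fact n * t ^ n) \<le> \<bar>t\<bar> ^ n / fact n"
  proof (intro exI allI impI)
    fix n :: nat
    have "\<bar>mat_pow P n x y\<bar> \<le> 1" using mat_pow_nonneg mat_pow_le1 by (simp add: abs_le_iff)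
    then have "\<bar>mat_pow P n x y\<bar> * \<bar>t\<bar>^n \<le> 1 * \<bar>t\<bar>^n" by (intro mult_right_mono) auto
    then show "norm (mat_pow P n x y / fact n * t ^ n) \<le> \<bar>t\<bar> ^ n / fact n"
      by (simp add: abs_mult power_abs divide_right_mono)
  qed
qed

lemma ptr_Ex: "ptr t x y = exp (-t) * Ex t x y"
proof -
  have "ptr t x y = (\<Sum>n. exp (-t) * (mat_pow P n x y / fact n * t^n))"
    unfolding ptr_def pois_def by (simp add: field_simps)
  also have "\<dots> = exp (-t) * Ex t x y" unfolding Ex_def by (rule suminf_mult[OF Ex_summable])
  finally show ?thesis .
qed

lemma Ex_deriv: "((\<lambda>t. Ex t x y) has_real_derivative (\<Sum>z\<in>UNIV. Ex t x z * P z y)) (at t)"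
proof -
  define c where "c n = mat_pow P n x y / fact n" for n
  have s: "\<And>y. summable (\<lambda>n. c n * y ^ n)" unfolding c_def using Ex_summable by simp
  have d: "((\<lambda>t. \<Sum>n. c n * t^n) has_real_derivative (\<Sum>n. diffs c n * t^n)) (at t)"
    by (rule termdiffs_strong_converges_everywhere[OF s])
  have "diffs c n * t^n = (\<Sum>z\<in>UNIV. (mat_pow P n x z / fact n * t^n) * P z y)" for n
  proof -
    have "diffs c n = mat_pow P (Suc n) x y / fact n"
      unfolding diffs_def c_def fact_Suc by (simp add: field_simps del: mat_pow.simps of_nat_Suc)
    then show ?thesis by (simp add: sum_divide_distrib sum_distrib_left sum_distrib_right mult_ac)
  qed
  then have "(\<Sum>n. diffs c n * t^n) = (\<Sum>n. \<Sum>z\<in>UNIV. (mat_pow P n x z / fact n * t^n) * P z y)" by simp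
  also have "\<dots> = (\<Sum>z\<in>UNIV. \<Sum>n. (mat_pow P n x z / fact n * t^n) * P z y)"
    by (rule suminf_sum) (intro summable_mult2 Ex_summable)
  also have "\<dots> = (\<Sum>z\<in>UNIV. Ex t x z * P z y)"
    unfolding Ex_def by (intro sum.cong refl suminf_mult2[symmetric] Ex_summable)
  finally show ?thesis using d unfolding c_def Ex_def by simp
qed

lemma Ex_deriv_left: "((\<lambda>t. Ex t x y) has_real_derivative (\<Sum>z\<in>UNIV. P x z * Ex t z y)) (at t)"
proof -
  define c where "c n = mat_pow P n x y / fact n" for n
  have s: "\<And>y. summable (\<lambda>n. c n * y ^ n)" unfolding c_def using Ex_summable by simp
  have d: "((\<lambda>t. \<Sum>n. c n * t^n) has_real_derivative (\<Sum>n. diffs c n * t^n)) (at t)"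
    by (rule termdiffs_strong_converges_everywhere[OF s])
  have "diffs c n * t^n = (\<Sum>z\<in>UNIV. P x z * (mat_pow P n z y / fact n * t^n))" for n
  proof -
    have "diffs c n = mat_pow P (Suc n) x y / fact n"
      unfolding diffs_def c_def fact_Suc by (simp add: field_simps del: mat_pow.simps of_nat_Suc)
    then show ?thesis unfolding mat_pow_left by (simp add: sum_divide_distrib sum_distrib_left sum_distrib_right mult_ac)
  qed
  then have "(\<Sum>n. diffs c n * t^n) = (\<Sum>n. \<Sum>z\<in>UNIV. P x z * (mat_pow P n z y / fact n * t^n))" by simp
  also have "\<dots> = (\<Sum>z\<in>UNIV. \<Sum>n. P x z * (mat_pow P n z y / fact n * t^n))"
    by (rule suminf_sum) (intro summable_mult Ex_summable)
  also have "\<dots> = (\<Sum>z\<in>UNIV. P x z * Ex t z y)"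
    unfolding Ex_def by (intro sum.cong refl suminf_mult Ex_summable)
  finally show ?thesis using d unfolding c_def Ex_def by simp
qed

lemma ptr_deriv: "((\<lambda>t. ptr t x y) has_real_derivative ((\<Sum>z\<in>UNIV. ptr t x z * P z y) - ptr t x y)) (at t)"
proof -
  have "((\<lambda>t. exp (-t) * Ex t x y) has_real_derivative
      (exp (-t) * (-1) * Ex t x y + exp (-t) * (\<Sum>z\<in>UNIV. Ex t x z * P z y))) (at t)"
    by (auto intro!: derivative_eq_intros Ex_deriv)
  moreover have "exp (-t) * (-1) * Ex t x y + exp (-t) * (\<Sum>z\<in>UNIV. Ex t x z * P z y)
      = (\<Sum>z\<in>UNIV. ptr t x z * P z y) - ptr t x y"
    unfolding ptr_Ex by (simp add: sum_distrib_left mult.assoc)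
  ultimately show ?thesis unfolding ptr_Ex by simp
qed

lemma ptr_deriv_left: "((\<lambda>t. ptr t x y) has_real_derivative ((\<Sum>z\<in>UNIV. P x z * ptr t z y) - ptr t x y)) (at t)"
proof -
  have "((\<lambda>t. exp (-t) * Ex t x y) has_real_derivative
      (exp (-t) * (-1) * Ex t x y + exp (-t) * (\<Sum>z\<in>UNIV. P x z * Ex t z y))) (at t)"
    by (auto intro!: derivative_eq_intros Ex_deriv_left)
  moreover have "exp (-t) * (-1) * Ex t x y + exp (-t) * (\<Sum>z\<in>UNIV. P x z * Ex t z y)
      = (\<Sum>z\<in>UNIV. P x z * ptr t z y) - ptr t x y"
    unfolding ptr_Ex by (simp add: sum_distrib_left mult.left_commute)
  ultimately show ?thesis unfolding ptr_Ex by simp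
qed

lemma ptr0: "ptr 0 x y = (if x = y then 1 else 0)"
proof -
  have "Ex 0 x y = mat_pow P 0 x y / fact 0" unfolding Ex_def using powser_zero[of "\<lambda>n. mat_pow P n x y / fact n"] by simp
  then show ?thesis unfolding ptr_Ex by simp
qed

lemma ptr_nonneg: "0 \<le> t \<Longrightarrow> 0 \<le> ptr t x y"
  unfolding ptr_def by (intro suminf_nonneg ptr_summable mult_nonneg_nonneg pois_nonneg mat_pow_nonneg)

lemma ptr_diag: "0 \<le> t \<Longrightarrow> exp (-t) \<le> ptr t x x"
proof -
  assume t: "0 \<le> t"
  have "(\<Sum>i\<in>{0}. pois t i * mat_pow P i x x) \<le> ptr t x x"
    unfolding ptr_def by (rule sum_le_suminf[OF ptr_summable[OF t]]) (auto intro!: mult_nonneg_nonneg pois_nonneg t mat_pow_nonneg)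
  then show ?thesis by (simp add: pois_def)
qed

lemma mat_pow_inv: "(\<Sum>x\<in>UNIV. q x * mat_pow P d x y) = q y"
proof (induction d arbitrary: y)
  case 0
  have "(\<Sum>x\<in>UNIV. q x * (if x = y then 1 else 0)) = (\<Sum>x\<in>UNIV. if x = y then q x else 0)"
    by (rule sum.cong) auto
  then show ?case by simp
next
  case (Suc d)
  have "(\<Sum>x\<in>UNIV. q x * mat_pow P (Suc d) x y) = (\<Sum>z\<in>UNIV. (\<Sum>x\<in>UNIV. q x * mat_pow P d x z) * P z y)"
    by (simp add: sum_distrib_left sum_distrib_right mult.assoc) (rule sum.swap)
  also have "\<dots> = q y" using Suc inv unfolding invariant_distribution_def by simp
  finally show ?case .
qed

lemma ptr_stationary: "0 \<le> t \<Longrightarrow> (\<Sum>x\<in>UNIV. q x * ptr t x y) = q y"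
proof -
  assume t: "0 \<le> t"
  have "(\<Sum>x\<in>UNIV. q x * ptr t x y) = (\<Sum>x\<in>UNIV. \<Sum>d. q x * (pois t d * mat_pow P d x y))"
    unfolding ptr_def by (intro sum.cong refl suminf_mult[symmetric] ptr_summable t)
  also have "\<dots> = (\<Sum>d. \<Sum>x\<in>UNIV. q x * (pois t d * mat_pow P d x y))"
    by (rule suminf_sum[symmetric]) (intro summable_mult ptr_summable t)
  also have "\<dots> = (\<Sum>d. pois t d * q y)"
  proof (intro suminf_cong)
    fix d
    have "(\<Sum>x\<in>UNIV. q x * (pois t d * mat_pow P d x y)) = pois t d * (\<Sum>x\<in>UNIV. q x * mat_pow P d x y)"
      by (simp add: sum_distrib_left mult.left_commute)
    then show "(\<Sum>x\<in>UNIV. q x * (pois t d * mat_pow P d x y)) = pois t d * q y" using mat_pow_inv by simp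
  qed
  also have "\<dots> = q y" using sums_mult2[OF pois_sums[of t], of "q y"] by (simp add: sums_iff)
  finally show ?thesis .
qed

lemma q_pos: "0 < q y"
proof -
  have qn: "\<forall>x. 0 \<le> q x" and qs: "(\<Sum>x\<in>UNIV. q x) = 1" using inv unfolding invariant_distribution_def by auto
  obtain x where x: "0 < q x"
  proof (rule ccontr)
    assume "\<not> thesis"
    then have "\<forall>x. q x \<le> 0" using that by (meson not_le)
    then have "(\<Sum>x\<in>UNIV. q x) \<le> 0" by (simp add: sum_nonpos)
    then show False using qs by simp
  qed
  obtain n where n: "mat_pow P n x y > 0" using irr unfolding irreducible_chain_def by blast
  have "q x * mat_pow P n x y \<le> (\<Sum>x\<in>UNIV. q x * mat_pow P n x y)"
    by (rule member_le_sum) (auto intro!: mult_nonneg_nonneg mat_pow_nonneg simp: qn)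
  then have "q x * mat_pow P n x y \<le> q y" using mat_pow_inv by simp
  moreover have "0 < q x * mat_pow P n x y" using x n by simp
  ultimately show ?thesis by simp
qed

end

context ctmc
begin

definition Lf :: "real \<Rightarrow> 's \<Rightarrow> real" where
  "Lf v z = (\<Sum>m\<in>UNIV. mu m * ptr v m z) / q z"

definition Dk :: "real \<Rightarrow> 's \<Rightarrow> real" where
  "Dk v z = (\<Sum>y\<in>UNIV. q y * Lf v y * kappa P y z)"

lemma qLf: "q z * Lf v z = (\<Sum>m\<in>UNIV. mu m * ptr v m z)"
  using q_pos[of z] unfolding Lf_def by simp

lemma sum_kappa: "(\<Sum>y\<in>UNIV. f y * kappa P y w) = (\<Sum>y\<in>UNIV. f y * P y w) - f w"
proof -
  have "(\<Sum>y\<in>UNIV. f y * (if y = w then 1 else 0)) = (\<Sum>y\<in>UNIV. if y = w then f y else 0)"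
    by (rule sum.cong) auto
  then have "(\<Sum>y\<in>UNIV. f y * (if y = w then 1 else 0)) = f w" by simp
  then show ?thesis unfolding kappa_def right_diff_distrib sum_subtractf by simp
qed

lemma sum_kappa_left: "(\<Sum>w\<in>UNIV. kappa P z w * f w) = (\<Sum>w\<in>UNIV. P z w * f w) - f z"
proof -
  have "(\<Sum>w\<in>UNIV. (if z = w then 1 else 0) * f w) = (\<Sum>w\<in>UNIV. if z = w then f w else 0)"
    by (rule sum.cong) auto
  then have "(\<Sum>w\<in>UNIV. (if z = w then 1 else 0) * f w) = f z" by simp
  then show ?thesis unfolding kappa_def left_diff_distrib sum_subtractf by simp
qed

lemma q_kappa: "(\<Sum>y\<in>UNIV. q y * kappa P y w) = 0"
  using inv unfolding sum_kappa invariant_distribution_def by simp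

lemma Lf_deriv: "((\<lambda>v. Lf v z) has_real_derivative (Dk v z / q z)) (at v)"
proof -
  have d: "((\<lambda>v. \<Sum>m\<in>UNIV. mu m * ptr v m z) has_real_derivative
      (\<Sum>m\<in>UNIV. mu m * ((\<Sum>y\<in>UNIV. ptr v m y * P y z) - ptr v m z))) (at v)"
    by (intro DERIV_sum DERIV_cmult ptr_deriv)
  have "(\<Sum>m\<in>UNIV. mu m * ((\<Sum>y\<in>UNIV. ptr v m y * P y z) - ptr v m z))
      = (\<Sum>y\<in>UNIV. (\<Sum>m\<in>UNIV. mu m * ptr v m y) * P y z) - (\<Sum>m\<in>UNIV. mu m * ptr v m z)"
    by (simp add: right_diff_distrib sum_subtractf sum_distrib_left sum_distrib_right mult.assoc)
       (rule sum.swap)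
  also have "\<dots> = Dk v z"
    unfolding Dk_def qLf sum_kappa by (rule refl)
  finally have "((\<lambda>v. \<Sum>m\<in>UNIV. mu m * ptr v m z) has_real_derivative Dk v z) (at v)" using d by simp
  then show ?thesis unfolding Lf_def by (rule DERIV_cdivide)
qed

lemma Lf_pos: "0 \<le> v \<Longrightarrow> 0 < Lf v z"
proof -
  assume v: "0 \<le> v"
  have "mu z * ptr v z z \<le> (\<Sum>m\<in>UNIV. mu m * ptr v m z)"
    by (rule member_le_sum) (auto intro!: mult_nonneg_nonneg ptr_nonneg v simp: less_imp_le[OF mupos[rule_format]])
  moreover have "0 < mu z * ptr v z z" using mupos ptr_diag[OF v, of z]
    by (metis exp_gt_zero less_le_trans mult_pos_pos)
  ultimately show ?thesis unfolding Lf_def using q_pos[of z] by simp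
qed

lemma coef_identity:
  fixes L :: "'s \<Rightarrow> real"
  assumes Lp: "\<And>y. 0 < L y"
  shows "(ln (L w) + 1) * (\<Sum>y\<in>UNIV. q y * L y * kappa P y w) - (\<Sum>z\<in>UNIV. q z * L z * ln (L z) * kappa P z w)
     + q w * (L w * (\<Sum>y\<in>UNIV - {w}. kappa_hat P q w y * Psi (L y / L w))) = 0"
proof -
  define G where "G y = q y * kappa P y w * (L y * ln (L y) - L y * ln (L w) - L y + L w)" for y
  have qw: "q w \<noteq> 0" using q_pos[of w] by simp
  have Lw: "L w \<noteq> 0" using Lp[of w] by simp
  have t3: "q w * (L w * (\<Sum>y\<in>UNIV - {w}. kappa_hat P q w y * Psi (L y / L w))) = (\<Sum>y\<in>UNIV - {w}. G y)"
    unfolding sum_distrib_left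
  proof (intro sum.cong refl)
    fix y
    have "L y \<noteq> 0" using Lp[of y] by simp
    then have lnd: "ln (L y / L w) = ln (L y) - ln (L w)" using Lw by (simp add: ln_div)
    show "q w * (L w * (kappa_hat P q w y * Psi (L y / L w))) = G y"
      unfolding kappa_hat_def Psi_def G_def lnd using qw Lw by (simp add: field_simps)
  qed
  have s3: "(\<Sum>y\<in>UNIV - {w}. G y) = (\<Sum>y\<in>UNIV. if y = w then 0 else G y)"
    by (subst sum.remove[of UNIV w]) (auto intro!: sum.cong)
  have "(ln (L w) + 1) * (\<Sum>y\<in>UNIV. q y * L y * kappa P y w) - (\<Sum>z\<in>UNIV. q z * L z * ln (L z) * kappa P z w)
     + (\<Sum>y\<in>UNIV. if y = w then 0 else G y)
     = (\<Sum>y\<in>UNIV. (ln (L w) + 1) * (q y * L y * kappa P y w) - q y * L y * ln (L y) * kappa P y w + (if y = w then 0 else G y))"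
    by (simp add: sum_distrib_left sum.distrib sum_subtractf)
  also have "\<dots> = (\<Sum>y\<in>UNIV. L w * (q y * kappa P y w))"
    by (intro sum.cong refl) (auto simp: G_def field_simps)
  also have "\<dots> = 0" using q_kappa[of w] by (simp add: sum_distrib_left[symmetric])
  finally show ?thesis using t3 s3 by simp
qed

end

context ctmc
begin

definition gf :: "real \<Rightarrow> 's \<Rightarrow> real" where "gf v z = q z * Lf v z * ln (Lf v z)"
definition Jf :: "real \<Rightarrow> 's \<Rightarrow> real \<Rightarrow> real" where "Jf b x v = (\<Sum>z\<in>UNIV. gf v z * ptr (b - v) z x)"
definition Kf :: "real \<Rightarrow> 's \<Rightarrow> real \<Rightarrow> real" where
  "Kf b x v = (\<Sum>w\<in>UNIV. q w * LambdaQ P q Lf v w * ptr (b - v) w x)"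

lemma gf_deriv: assumes v: "0 \<le> v"
  shows "((\<lambda>v. gf v z) has_real_derivative (Dk v z * (ln (Lf v z) + 1))) (at v)"
proof -
  have dln: "((\<lambda>v. ln (Lf v z)) has_real_derivative (1 / Lf v z) * (Dk v z / q z)) (at v)"
    by (rule DERIV_chain'[OF Lf_deriv DERIV_ln_divide[OF Lf_pos[OF v]]])
  have dm: "((\<lambda>v. Lf v z * ln (Lf v z)) has_real_derivative
      (Dk v z / q z) * ln (Lf v z) + ((1 / Lf v z) * (Dk v z / q z)) * Lf v z) (at v)"
    by (rule DERIV_mult[OF Lf_deriv dln])
  have dc: "((\<lambda>v. q z * (Lf v z * ln (Lf v z))) has_real_derivative
      q z * ((Dk v z / q z) * ln (Lf v z) + ((1 / Lf v z) * (Dk v z / q z)) * Lf v z)) (at v)"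
    by (rule DERIV_cmult[OF dm])
  have "q z * ((Dk v z / q z) * ln (Lf v z) + ((1 / Lf v z) * (Dk v z / q z)) * Lf v z) = Dk v z * (ln (Lf v z) + 1)"
    using q_pos[of z] Lf_pos[OF v, of z] by (simp add: field_simps)
  then show ?thesis using dc unfolding gf_def by (simp add: mult.assoc)
qed

lemma ptr_rev_deriv:
  "((\<lambda>v. ptr (b - v) z x) has_real_derivative - (\<Sum>w\<in>UNIV. kappa P z w * ptr (b - v) w x)) (at v)"
proof -
  have d1: "((\<lambda>v. b - v) has_real_derivative -1) (at v)" by (auto intro!: derivative_eq_intros)
  have "((\<lambda>v. ptr (b - v) z x) has_real_derivative
     ((\<Sum>w\<in>UNIV. P z w * ptr (b - v) w x) - ptr (b - v) z x) * (-1)) (at v)"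
    by (rule DERIV_chain'[OF d1 ptr_deriv_left])
  then show ?thesis unfolding sum_kappa_left by simp
qed

lemma J_deriv: assumes v: "0 \<le> v"
  shows "((\<lambda>v. Jf b x v) has_real_derivative - Kf b x v) (at v)"
proof -
  let ?p = "\<lambda>w. ptr (b - v) w x"
  have d: "((\<lambda>v. Jf b x v) has_real_derivative
     (\<Sum>z\<in>UNIV. Dk v z * (ln (Lf v z) + 1) * ?p z + (- (\<Sum>w\<in>UNIV. kappa P z w * ?p w)) * gf v z)) (at v)"
    unfolding Jf_def by (intro DERIV_sum DERIV_mult gf_deriv v ptr_rev_deriv)
  have e1: "(\<Sum>z\<in>UNIV. Dk v z * (ln (Lf v z) + 1) * ?p z + (- (\<Sum>w\<in>UNIV. kappa P z w * ?p w)) * gf v z)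
      = (\<Sum>z\<in>UNIV. Dk v z * (ln (Lf v z) + 1) * ?p z) - (\<Sum>z\<in>UNIV. \<Sum>w\<in>UNIV. gf v z * kappa P z w * ?p w)"
    by (simp add: sum.distrib sum_subtractf sum_distrib_left sum_distrib_right mult_ac)
  have e2: "(\<Sum>z\<in>UNIV. \<Sum>w\<in>UNIV. gf v z * kappa P z w * ?p w) = (\<Sum>w\<in>UNIV. ?p w * (\<Sum>z\<in>UNIV. gf v z * kappa P z w))"
    by (subst sum.swap) (simp add: sum_distrib_left mult_ac)
  have e3: "(\<Sum>z\<in>UNIV. Dk v z * (ln (Lf v z) + 1) * ?p z) - (\<Sum>w\<in>UNIV. ?p w * (\<Sum>z\<in>UNIV. gf v z * kappa P z w))
      = (\<Sum>w\<in>UNIV. ?p w * ((ln (Lf v w) + 1) * Dk v w - (\<Sum>z\<in>UNIV. gf v z * kappa P z w)))"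
    by (simp add: sum_subtractf right_diff_distrib mult_ac)
  have e4: "(ln (Lf v w) + 1) * Dk v w - (\<Sum>z\<in>UNIV. gf v z * kappa P z w) = - (q w * LambdaQ P q Lf v w)" for w
    using coef_identity[of "Lf v" w] Lf_pos[OF v]
    unfolding Dk_def gf_def LambdaQ_def LambdaP_def by simp
  have "(\<Sum>z\<in>UNIV. Dk v z * (ln (Lf v z) + 1) * ?p z + (- (\<Sum>w\<in>UNIV. kappa P z w * ?p w)) * gf v z) = - Kf b x v"
    unfolding e1 e2 e3 e4 Kf_def by (simp add: sum_negf mult_ac)
  then show ?thesis using d by simp
qed

end

context ctmc
begin

abbreviation X where "X \<equiv> ctchain Z N"

lemma X_meas[measurable]: "X t \<in> measurable M (count_space UNIV)"
  unfolding ctchain_def by (rule Xmeas)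

lemma Ev_set: "Ev m tx = {\<omega>\<in>space M. Z 0 \<omega> = m \<and> (\<forall>p\<in>set tx. X (fst p) \<omega> = snd p)}"
  unfolding Ev_def ctchain_def by (auto simp: all_set_conv_all_nth)

lemma cyl_union: "{\<omega>\<in>space M. \<forall>p\<in>set tx. X (fst p) \<omega> = snd p} = (\<Union>m\<in>UNIV. Ev m tx)"
  unfolding Ev_set by auto

lemma Xset_sets[measurable]: "{\<omega>\<in>space M. X t \<omega> = y} \<in> sets M"
  using measurable_sets[OF X_meas, of "{y}" t] by (simp add: vimage_def Int_def conj_commute)

lemma cyl_sets[measurable]: "finite S \<Longrightarrow> {\<omega>\<in>space M. \<forall>p\<in>S. X (fst p) \<omega> = snd p} \<in> sets M"
  using Xset_sets by (intro sets.sets_Collect_finite_All) auto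

end

locale ctmc_nu = ctmc M P q mu Z N for M :: "'w measure" and P :: "'s::finite \<Rightarrow> 's \<Rightarrow> real" and q mu Z N +
  fixes nu :: "'w measure" and nu0 :: "'s \<Rightarrow> real"
  assumes nu_prob: "prob_space nu" and nu_sets: "sets nu = sets M"
    and nu_Ev: "\<And>m tx. sorted (0 # map fst tx) \<Longrightarrow> measure nu (Ev m tx) = nu0 m * cp ptr 0 m tx"
begin

sublocale nu: prob_space nu by (rule nu_prob)

lemma nu_space: "space nu = space M" using nu_sets by (rule sets_eq_imp_space_eq)

lemma nu_cyl: assumes "sorted (0 # map fst tx)"
  shows "measure nu {\<omega>\<in>space M. \<forall>p\<in>set tx. X (fst p) \<omega> = snd p} = (\<Sum>m\<in>UNIV. nu0 m * cp ptr 0 m tx)"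
proof -
  have "measure nu (\<Union>m\<in>UNIV. Ev m tx) = (\<Sum>m\<in>UNIV. measure nu (Ev m tx))"
    by (rule measure_finite_Union)
       (auto simp: nu_sets disjoint_family_on_def Ev_def nu.emeasure_finite)
  then show ?thesis unfolding cyl_union using nu_Ev[OF assms] by simp
qed

definition rho :: "real \<Rightarrow> 's \<Rightarrow> real" where
  "rho v w = measure nu {\<omega>\<in>space M. X v \<omega> = w}"

lemma rho_eq: "0 \<le> v \<Longrightarrow> rho v w = (\<Sum>m\<in>UNIV. nu0 m * ptr v m w)"
proof -
  assume v: "0 \<le> v"
  have "{\<omega>\<in>space M. X v \<omega> = w} = {\<omega>\<in>space M. \<forall>p\<in>set [(v,w)]. X (fst p) \<omega> = snd p}" by simp
  then show ?thesis unfolding rho_def using nu_cyl[of "[(v,w)]"] v by simp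
qed

lemma cyl_factor:
  assumes S: "finite S" and Sb: "\<forall>p\<in>S. b \<le> fst p"
  obtains c where "\<And>v z x. 0 \<le> v \<Longrightarrow> v \<le> b \<Longrightarrow>
     measure nu {\<omega>\<in>space M. X v \<omega> = z \<and> X b \<omega> = x \<and> (\<forall>p\<in>S. X (fst p) \<omega> = snd p)} = rho v z * ptr (b - v) z x * c x"
proof -
  obtain L0 where L0: "set L0 = S" using finite_list[OF S] by blast
  define L where "L = sort_key fst L0"
  have sL: "set L = S" unfolding L_def using L0 by simp
  have stL: "sorted (map fst L)" unfolding L_def by simp
  define c where "c x = cp ptr b x L" for x
  show ?thesis
  proof (rule that[of c])
    fix v z x assume v: "0 \<le> v" "v \<le> b"
    define tx where "tx = (v,z)#(b,x)#L"
    have st: "sorted (0 # map fst tx)" unfolding tx_def using v stL Sb sL by auto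
    have e: "{\<omega>\<in>space M. X v \<omega> = z \<and> X b \<omega> = x \<and> (\<forall>p\<in>S. X (fst p) \<omega> = snd p)}
        = {\<omega>\<in>space M. \<forall>p\<in>set tx. X (fst p) \<omega> = snd p}" unfolding tx_def sL[symmetric] by auto
    have "(\<Sum>m\<in>UNIV. nu0 m * cp ptr 0 m tx) = (\<Sum>m\<in>UNIV. nu0 m * ptr v m z) * ptr (b - v) z x * c x"
      unfolding tx_def c_def by (simp add: sum_distrib_left sum_distrib_right mult_ac)
    then show "measure nu {\<omega>\<in>space M. X v \<omega> = z \<and> X b \<omega> = x \<and> (\<forall>p\<in>S. X (fst p) \<omega> = snd p)} = rho v z * ptr (b - v) z x * c x"
      unfolding e nu_cyl[OF st] rho_eq[OF v(1)] by simp
  qed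
qed

lemma expect_factor:
  assumes S: "finite S" and Sb: "\<forall>p\<in>S. b \<le> fst p"
    and c: "\<And>v z x. 0 \<le> v \<Longrightarrow> v \<le> b \<Longrightarrow>
     measure nu {\<omega>\<in>space M. X v \<omega> = z \<and> X b \<omega> = x \<and> (\<forall>p\<in>S. X (fst p) \<omega> = snd p)} = rho v z * ptr (b - v) z x * c x"
    and v: "0 \<le> v" "v \<le> b"
  shows "(\<integral>\<omega>. indicator {\<omega>\<in>space M. \<forall>p\<in>S. X (fst p) \<omega> = snd p} \<omega> * F (X v \<omega>) \<partial>nu)
       = (\<Sum>x\<in>UNIV. c x * (\<Sum>z\<in>UNIV. rho v z * F z * ptr (b - v) z x))"
proof -
  let ?E = "\<lambda>z x. {\<omega>\<in>space M. X v \<omega> = z \<and> X b \<omega> = x \<and> (\<forall>p\<in>S. X (fst p) \<omega> = snd p)}"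
  have Es: "?E z x \<in> sets nu" for z x
  proof -
    have "?E z x = {\<omega>\<in>space M. X v \<omega> = z} \<inter> {\<omega>\<in>space M. X b \<omega> = x} \<inter> {\<omega>\<in>space M. \<forall>p\<in>S. X (fst p) \<omega> = snd p}"
      by auto
    then show ?thesis unfolding nu_sets using S by (auto intro!: sets.Int)
  qed
  have pt: "indicator {\<omega>\<in>space M. \<forall>p\<in>S. X (fst p) \<omega> = snd p} \<omega> * F (X v \<omega>)
      = (\<Sum>z\<in>UNIV. \<Sum>x\<in>UNIV. F z * indicator (?E z x) \<omega>)" if "\<omega> \<in> space nu" for \<omega>
  proof -
    let ?I = "indicator {\<omega>\<in>space M. \<forall>p\<in>S. X (fst p) \<omega> = snd p} \<omega> :: real"
    have "(\<Sum>z\<in>UNIV. \<Sum>x\<in>UNIV. F z * indicator (?E z x) \<omega>) = (\<Sum>z\<in>UNIV. \<Sum>x\<in>UNIV. if z = X v \<omega> then (if x = X b \<omega> then F z * ?I else 0) else 0)"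
      using that unfolding nu_space by (intro sum.cong refl) (auto simp: indicator_def)
    also have "\<dots> = (\<Sum>z\<in>UNIV. if z = X v \<omega> then F z * ?I else 0)"
    proof (intro sum.cong refl)
      fix z show "(\<Sum>x\<in>UNIV. if z = X v \<omega> then (if x = X b \<omega> then F z * ?I else 0) else 0) = (if z = X v \<omega> then F z * ?I else 0)"
        by (cases "z = X v \<omega>") simp_all
    qed
    also have "\<dots> = F (X v \<omega>) * ?I" by simp
    finally show ?thesis by simp
  qed
  have "(\<integral>\<omega>. indicator {\<omega>\<in>space M. \<forall>p\<in>S. X (fst p) \<omega> = snd p} \<omega> * F (X v \<omega>) \<partial>nu)
      = (\<integral>\<omega>. (\<Sum>z\<in>UNIV. \<Sum>x\<in>UNIV. F z * indicator (?E z x) \<omega>) \<partial>nu)"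
    by (rule Bochner_Integration.integral_cong[OF refl pt])
  also have "\<dots> = (\<Sum>z\<in>UNIV. \<Sum>x\<in>UNIV. F z * measure nu (?E z x))"
  proof -
    have ii: "integrable nu (\<lambda>\<omega>. indicator (?E z x) \<omega> :: real)" for z x
      by (intro integrable_real_indicator Es) (simp add: less_top[symmetric] nu.emeasure_finite)
    have mi: "(\<integral>\<omega>. indicator (?E z x) \<omega> \<partial>nu) = measure nu (?E z x)" for z x
      using sets.sets_into_space[OF Es[of z x]] by (simp add: Int_absorb2)
    have "(\<integral>\<omega>. (\<Sum>z\<in>UNIV. \<Sum>x\<in>UNIV. F z * indicator (?E z x) \<omega>) \<partial>nu)
        = (\<Sum>z\<in>UNIV. \<integral>\<omega>. (\<Sum>x\<in>UNIV. F z * indicator (?E z x) \<omega>) \<partial>nu)"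
      by (rule Bochner_Integration.integral_sum) (intro Bochner_Integration.integrable_sum integrable_mult_right ii)
    also have "\<dots> = (\<Sum>z\<in>UNIV. \<Sum>x\<in>UNIV. \<integral>\<omega>. F z * indicator (?E z x) \<omega> \<partial>nu)"
      by (intro sum.cong refl Bochner_Integration.integral_sum integrable_mult_right ii)
    also have "\<dots> = (\<Sum>z\<in>UNIV. \<Sum>x\<in>UNIV. F z * measure nu (?E z x))"
      by (simp only: integral_mult_right_zero mi)
    finally show ?thesis .
  qed
  also have "\<dots> = (\<Sum>z\<in>UNIV. \<Sum>x\<in>UNIV. F z * (rho v z * ptr (b - v) z x * c x))"
    using c[OF v] by simp
  also have "\<dots> = (\<Sum>x\<in>UNIV. c x * (\<Sum>z\<in>UNIV. rho v z * F z * ptr (b - v) z x))"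
    by (subst sum.swap) (simp add: sum_distrib_left mult_ac)
  finally show ?thesis .
qed

end

definition cn :: "real \<Rightarrow> nat \<Rightarrow> real \<Rightarrow> real" where
  "cn r n u = max 0 (min r (real_of_int \<lfloor>u * 2^n\<rfloor> / 2^n))"

lemma cn_bounds: assumes "0 \<le> u" "u \<le> r"
  shows "cn r n u \<le> u" "u - 1 / 2^n < cn r n u" "0 \<le> cn r n u" "cn r n u \<le> r"
proof -
  have f1: "real_of_int \<lfloor>u * 2^n\<rfloor> \<le> u * 2^n" by simp
  have f2: "u * 2^n - 1 < real_of_int \<lfloor>u * 2^n\<rfloor>" by (rule real_of_int_floor_gt_diff_one)
  have f0: "0 \<le> real_of_int \<lfloor>u * 2^n\<rfloor>" using assms by simp
  have p: "(0::real) < 2^n" by simp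
  have a1: "real_of_int \<lfloor>u * 2^n\<rfloor> / 2^n \<le> u" using f1 p by (simp add: divide_le_eq)
  have "(u * 2^n - 1) / 2^n < real_of_int \<lfloor>u * 2^n\<rfloor> / 2^n" by (rule divide_strict_right_mono[OF f2 p])
  moreover have "(u * 2^n - 1) / 2^n = u - 1 / 2^n" by (simp add: diff_divide_distrib)
  ultimately have a2: "u - 1 / 2^n < real_of_int \<lfloor>u * 2^n\<rfloor> / 2^n" by simp
  have a0: "0 \<le> real_of_int \<lfloor>u * 2^n\<rfloor> / 2^n" using f0 by simp
  have e: "cn r n u = real_of_int \<lfloor>u * 2^n\<rfloor> / 2^n" unfolding cn_def using a0 a1 assms by simp
  show "cn r n u \<le> u" "u - 1 / 2^n < cn r n u" "0 \<le> cn r n u" "cn r n u \<le> r"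
    using a0 a1 a2 assms unfolding e by auto
qed

context ctmc
begin

lemma N_rc: assumes w: "\<omega> \<in> space M" and t0: "0 \<le> t0"
  shows "\<exists>b>t0. \<forall>s. t0 \<le> s \<and> s < b \<longrightarrow> N s \<omega> = N t0 \<omega>"
proof -
  have "continuous (at_right t0) (\<lambda>s. real (N s \<omega>))" using PP w t0 unfolding poisson_process1_def by auto
  then have "((\<lambda>s. real (N s \<omega>)) \<longlongrightarrow> real (N t0 \<omega>)) (at_right t0)"
    by (simp add: continuous_within)
  then have "eventually (\<lambda>s. dist (real (N s \<omega>)) (real (N t0 \<omega>)) < 1/2) (at_right t0)"
    by (rule tendstoD) simp
  then obtain b where b: "b > t0" "\<forall>y>t0. y < b \<longrightarrow> dist (real (N y \<omega>)) (real (N t0 \<omega>)) < 1/2"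
    using eventually_at_right[of t0 "t0 + 1"] by auto
  show ?thesis
  proof (intro exI[of _ b] conjI allI impI)
    show "t0 < b" by fact
    fix s assume s: "t0 \<le> s \<and> s < b"
    show "N s \<omega> = N t0 \<omega>"
    proof (cases "s = t0")
      case False
      then have "dist (real (N s \<omega>)) (real (N t0 \<omega>)) < 1/2" using b s by auto
      then have d: "\<bar>real (N s \<omega>) - real (N t0 \<omega>)\<bar> < 1" by (simp add: dist_real_def)
      show ?thesis
      proof (rule ccontr)
        assume ne: "N s \<omega> \<noteq> N t0 \<omega>"
        then have "N s \<omega> + 1 \<le> N t0 \<omega> \<or> N t0 \<omega> + 1 \<le> N s \<omega>" by arith
        then have "real (N s \<omega>) + 1 \<le> real (N t0 \<omega>) \<or> real (N t0 \<omega>) + 1 \<le> real (N s \<omega>)"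
          by (metis of_nat_1 of_nat_add of_nat_le_iff)
        then show False using d by linarith
      qed
    qed simp
  qed
qed

lemma approx_eventually: assumes w: "\<omega> \<in> space M" and u: "0 \<le> u" "u \<le> r" and rT: "r \<le> T"
  shows "eventually (\<lambda>n. X (T - cn r n u) \<omega> = X (T - u) \<omega>) sequentially"
proof -
  have tu: "0 \<le> T - u" using u rT by linarith
  obtain b where b: "b > T - u" "\<forall>s. T - u \<le> s \<and> s < b \<longrightarrow> N s \<omega> = N (T - u) \<omega>"
    using N_rc[OF w tu] by blast
  have "\<exists>n. (1/2::real)^n < b - (T - u)" using b(1) by (intro real_arch_pow_inv) simp_all
  then obtain n0 where n0: "(1/2::real)^n0 < b - (T - u)" by blast
  show ?thesis
  proof (rule eventually_sequentiallyI[of n0])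
    fix n assume n: "n0 \<le> n"
    have "(1/2::real)^n \<le> (1/2)^n0" by (rule power_decreasing[OF n]) simp_all
    then have "(1/2::real)^n < b - (T - u)" using n0 by linarith
    then have h: "1 / 2^n < b - (T - u)" by (simp add: power_one_over)
    have c1: "cn r n u \<le> u" and c2: "u - 1 / 2^n < cn r n u" using cn_bounds[OF u] by auto
    have "T - u \<le> T - cn r n u \<and> T - cn r n u < b" using h c1 c2 by linarith
    then have "N (T - cn r n u) \<omega> = N (T - u) \<omega>" using b(2) by blast
    then show "X (T - cn r n u) \<omega> = X (T - u) \<omega>" unfolding ctchain_def by simp
  qed
qed

lemma X_meas_F: assumes spF: "space F = space M" and ev: "\<And>y. {\<omega>\<in>space M. X t \<omega> = y} \<in> sets F"
  shows "X t \<in> measurable F (count_space UNIV)"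
proof -
  have "X t -` {y} \<inter> space F \<in> sets F" for y
  proof -
    have "X t -` {y} \<inter> space F = {\<omega>\<in>space M. X t \<omega> = y}" using spF by auto
    then show ?thesis using ev by simp
  qed
  then show ?thesis unfolding measurable_count_space_eq2_countable by auto
qed

lemma jm:
  fixes F :: "'w measure" and Lam :: "real \<Rightarrow> 's \<Rightarrow> real"
  assumes spF: "space F = space M" and evF: "\<And>u y. 0 \<le> u \<Longrightarrow> u \<le> r \<Longrightarrow> {\<omega>\<in>space M. X (T - u) \<omega> = y} \<in> sets F"
    and rT: "r \<le> T" and r0: "0 \<le> r" and cont: "\<And>w. continuous_on {0..r} (\<lambda>u. Lam u w)"
  shows "(\<lambda>p. indicator {0..r} (snd p) * Lam (snd p) (X (T - snd p) (fst p))) \<in> borel_measurable (F \<Otimes>\<^sub>M lborel)"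
proof (rule borel_measurable_LIMSEQ_real)
  let ?A = "\<lambda>n p. indicator {0..r} (snd p) * Lam (snd p) (X (T - cn r n (snd p)) (fst p))"
  show "?A n \<in> borel_measurable (F \<Otimes>\<^sub>M lborel)" for n
  proof -
    have fl: "(\<lambda>p::'w \<times> real. \<lfloor>snd p * 2^n\<rfloor>) \<in> measurable (F \<Otimes>\<^sub>M lborel) (count_space UNIV)"
    proof -
      have "(\<lambda>p::'w \<times> real. snd p * 2^n) \<in> borel_measurable (F \<Otimes>\<^sub>M lborel)" by measurable
      then show ?thesis by (rule measurable_compose[OF _ measurable_real_floor])
    qed
    have Xi: "(\<lambda>p. X (T - max 0 (min r (real_of_int i / 2^n))) (fst p)) \<in> measurable (F \<Otimes>\<^sub>M lborel) (count_space UNIV)" for i :: int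
    proof -
      have "X (T - max 0 (min r (real_of_int i / 2^n))) \<in> measurable F (count_space UNIV)"
        using r0 by (intro X_meas_F spF evF) auto
      then show ?thesis by (rule measurable_compose[OF measurable_fst])
    qed
    have Xc: "(\<lambda>p. X (T - cn r n (snd p)) (fst p)) \<in> measurable (F \<Otimes>\<^sub>M lborel) (count_space UNIV)"
      unfolding cn_def
      by (rule measurable_compose_countable'[where g="\<lambda>p. \<lfloor>snd p * 2^n\<rfloor>" and I=UNIV, OF Xi fl]) auto
    have Lw: "(\<lambda>p. indicator {0..r} (snd p) * Lam (snd p) w) \<in> borel_measurable (F \<Otimes>\<^sub>M lborel)" for w
    proof -
      have "(\<lambda>u. indicator {0..r} u *\<^sub>R Lam u w) \<in> borel_measurable borel"
        by (rule borel_measurable_continuous_on_indicator[OF _ cont]) simp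
      then have "(\<lambda>u. indicator {0..r} u * Lam u w) \<in> borel_measurable lborel" by simp
      then show ?thesis by (rule measurable_compose[OF measurable_snd])
    qed
    show ?thesis
      by (rule measurable_compose_countable'[where f="\<lambda>w p. indicator {0..r} (snd p) * Lam (snd p) w"
            and g="\<lambda>p. X (T - cn r n (snd p)) (fst p)" and I=UNIV, OF Lw Xc]) auto
  qed
  fix p :: "'w \<times> real" assume p: "p \<in> space (F \<Otimes>\<^sub>M lborel)"
  obtain \<omega> u where pe: "p = (\<omega>, u)" by (cases p)
  have w: "\<omega> \<in> space M" using p spF unfolding pe by (simp add: space_pair_measure)
  show "(\<lambda>n. ?A n p) \<longlonglongrightarrow> indicator {0..r} (snd p) * Lam (snd p) (X (T - snd p) (fst p))"
  proof (cases "u \<in> {0..r}")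
    case True
    have "eventually (\<lambda>n. ?A n p = indicator {0..r} (snd p) * Lam (snd p) (X (T - snd p) (fst p))) sequentially"
      using approx_eventually[OF w _ _ rT, of u] True unfolding pe by (auto elim!: eventually_mono)
    then show ?thesis by (rule tendsto_eventually)
  next
    case False
    then show ?thesis unfolding pe by simp
  qed
qed

end

context ctmc
begin

lemma Lf_cont: "continuous_on S (\<lambda>v. Lf v z)"
  by (rule continuous_at_imp_continuous_on) (auto intro: DERIV_isCont[OF Lf_deriv])

lemma ptr_rev_cont: "continuous_on S (\<lambda>v. ptr (b - v) z x)"
  by (rule continuous_at_imp_continuous_on) (auto intro: DERIV_isCont[OF ptr_rev_deriv])

lemma LamP_cont: assumes S: "\<forall>v\<in>S. 0 \<le> v"
  shows "continuous_on S (\<lambda>v. LambdaP P q Lf v w)"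
proof -
  have nz: "\<forall>v\<in>S. Lf v y \<noteq> 0" for y using S Lf_pos by (metis less_irrefl)
  have nz2: "\<forall>v\<in>S. Lf v y / Lf v w \<noteq> 0" for y using nz by simp
  show ?thesis unfolding LambdaP_def Psi_def
    by (intro continuous_intros Lf_cont nz nz2)
qed

lemma LamQ_cont: assumes S: "\<forall>v\<in>S. 0 \<le> v"
  shows "continuous_on S (\<lambda>v. LambdaQ P q Lf v w)"
  unfolding LambdaQ_def by (intro continuous_intros Lf_cont LamP_cont S)

lemma Kf_cont: assumes S: "\<forall>v\<in>S. 0 \<le> v"
  shows "continuous_on S (\<lambda>v. Kf b x v)"
  unfolding Kf_def by (intro continuous_intros LamQ_cont S ptr_rev_cont)

lemma Xset_union: "{\<omega>\<in>space M. X v \<omega> = w} = (\<Union>m\<in>UNIV. Ev m [(v,w)])"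
  unfolding Ev_set by auto

lemma prob_X: assumes v: "0 \<le> v" shows "prob {\<omega>\<in>space M. X v \<omega> = w} = (\<Sum>m\<in>UNIV. mu m * ptr v m w)"
proof -
  have "prob (\<Union>m\<in>UNIV. Ev m [(v,w)]) = (\<Sum>m\<in>UNIV. prob (Ev m [(v,w)]))"
    by (rule measure_finite_Union) (auto simp: disjoint_family_on_def Ev_def emeasure_finite)
  also have "\<dots> = (\<Sum>m\<in>UNIV. mu m * ptr v m w)"
    using v by (intro sum.cong refl) (simp add: fdd)
  finally show ?thesis unfolding Xset_union .
qed

lemma ell_Lf: "0 \<le> v \<Longrightarrow> ell M X q v w = Lf v w"
  unfolding ell_def Lf_def using prob_X by simp

end

locale mart = ctmc_nu M P q mu Z N nu nu0
  for M :: "'w measure" and P :: "'s::finite \<Rightarrow> 's \<Rightarrow> real" and q mu Z N nu nu0 +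
  fixes T :: real and Phi Lam :: "real \<Rightarrow> 's \<Rightarrow> real"
  assumes T0: "0 < T"
    and contL: "\<And>w. continuous_on {0..T} (\<lambda>v. Lam v w)"
    and rhoPhi: "\<And>v w. 0 \<le> v \<Longrightarrow> v \<le> T \<Longrightarrow> rho v w * Phi v w = gf v w"
    and rhoLam: "\<And>v w. 0 \<le> v \<Longrightarrow> v \<le> T \<Longrightarrow> rho v w * Lam v w = q w * LambdaQ P q Lf v w"
begin

definition gens :: "real \<Rightarrow> 'w set set" where
  "gens s = {{\<omega>\<in>space M. X (T - u) \<omega> = y} | u y. 0 \<le> u \<and> u \<le> s}"

definition G :: "real \<Rightarrow> 'w measure" where
  "G s = nat_filtration M (\<lambda>s. X (T - s)) s"

definition Y :: "real \<Rightarrow> 'w \<Rightarrow> real" where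
  "Y s \<omega> = Phi (T - s) (X (T - s) \<omega>) - (LINT u:{0..s}|lborel. Lam (T - u) (X (T - u) \<omega>))"

lemma gens_Pow: "gens s \<subseteq> Pow (space M)" unfolding gens_def by auto

lemma G_eq: "G s = sigma (space M) (gens s)" unfolding G_def nat_filtration_def gens_def ..

lemma space_G: "space (G s) = space M" unfolding G_eq using gens_Pow by simp

lemma sets_G: "sets (G s) = sigma_sets (space M) (gens s)" unfolding G_eq using gens_Pow by simp

lemma gens_sets: "gens s \<subseteq> sets M" unfolding gens_def using Xset_sets by auto

lemma G_sub: "sets (G s) \<subseteq> sets M"
  unfolding sets_G by (rule sets.sigma_sets_subset[OF gens_sets])

lemma ev_G: "0 \<le> u \<Longrightarrow> u \<le> s \<Longrightarrow> {\<omega>\<in>space M. X (T - u) \<omega> = y} \<in> sets (G s)"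
  unfolding sets_G gens_def by (rule sigma_sets.Basic) auto

lemma G_mono: "s \<le> t \<Longrightarrow> sets (G s) \<subseteq> sets (G t)"
  unfolding sets_G by (rule sigma_sets_subseteq) (auto simp: gens_def)

lemma subalg: "subalgebra nu (G s)"
  unfolding subalgebra_def using space_G nu_space G_sub nu_sets by auto

lemma LamU_cont: "s \<le> T \<Longrightarrow> continuous_on {0..s} (\<lambda>u. Lam (T - u) w)"
proof -
  assume s: "s \<le> T"
  have "continuous_on {0..s} (\<lambda>u. T - u)" by (intro continuous_intros)
  moreover have "(\<lambda>u. T - u) ` {0..s} \<subseteq> {0..T}" using s by auto
  ultimately show ?thesis using continuous_on_compose2[OF contL] by blast
qed

lemma Lam_bound: obtains B where "0 \<le> B" "\<And>v w. 0 \<le> v \<Longrightarrow> v \<le> T \<Longrightarrow> \<bar>Lam v w\<bar> \<le> B"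
proof -
  have "\<forall>w. \<exists>B. \<forall>v\<in>{0..T}. \<bar>Lam v w\<bar> \<le> B"
  proof
    fix w
    have "compact ((\<lambda>v. Lam v w) ` {0..T})" by (intro compact_continuous_image contL) simp
    then have "bounded ((\<lambda>v. Lam v w) ` {0..T})" by (rule compact_imp_bounded)
    then show "\<exists>B. \<forall>v\<in>{0..T}. \<bar>Lam v w\<bar> \<le> B" unfolding bounded_iff by auto
  qed
  then have "\<exists>Bf. \<forall>w. \<forall>v\<in>{0..T}. \<bar>Lam v w\<bar> \<le> Bf w" by (rule choice)
  then obtain Bf where Bf: "\<And>w v. v \<in> {0..T} \<Longrightarrow> \<bar>Lam v w\<bar> \<le> Bf w" by blast
  define B where "B = (\<Sum>w\<in>UNIV. \<bar>Bf w\<bar>)"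
  show ?thesis
  proof (rule that[of B])
    show "0 \<le> B" unfolding B_def by (simp add: sum_nonneg)
    fix v w assume "0 \<le> v" "v \<le> T"
    then have "\<bar>Lam v w\<bar> \<le> \<bar>Bf w\<bar>" using Bf[of v w] by auto
    also have "\<dots> \<le> B" unfolding B_def by (rule member_le_sum) auto
    finally show "\<bar>Lam v w\<bar> \<le> B" .
  qed
qed

lemma jmG: assumes "0 \<le> s" "s \<le> T"
  shows "(\<lambda>p. indicator {0..s} (snd p) * Lam (T - snd p) (X (T - snd p) (fst p))) \<in> borel_measurable (G s \<Otimes>\<^sub>M lborel)"
proof -
  have "(\<lambda>p. indicator {0..s} (snd p) * (\<lambda>u w. Lam (T - u) w) (snd p) (X (T - snd p) (fst p))) \<in> borel_measurable (G s \<Otimes>\<^sub>M lborel)"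
    by (rule jm[where F="G s" and r=s and T=T and Lam="\<lambda>u w. Lam (T - u) w", OF space_G ev_G assms(2) assms(1) LamU_cont[OF assms(2)]])
  then show ?thesis by simp
qed

lemma jmM: assumes "0 \<le> s" "s \<le> T"
  shows "(\<lambda>p. indicator {0..s} (snd p) * Lam (T - snd p) (X (T - snd p) (fst p))) \<in> borel_measurable (nu \<Otimes>\<^sub>M lborel)"
proof -
  have "(\<lambda>p. indicator {0..s} (snd p) * (\<lambda>u w. Lam (T - u) w) (snd p) (X (T - snd p) (fst p))) \<in> borel_measurable (M \<Otimes>\<^sub>M lborel)"
    by (rule jm[where F=M and r=s and T=T and Lam="\<lambda>u w. Lam (T - u) w", OF refl Xset_sets assms(2) assms(1) LamU_cont[OF assms(2)]])
  moreover have "sets (nu \<Otimes>\<^sub>M lborel) = sets (M \<Otimes>\<^sub>M lborel)" by (rule sets_pair_measure_cong[OF nu_sets refl])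
  ultimately show ?thesis by (subst measurable_cong_sets[OF _ refl]) simp_all
qed

lemma path_meas: assumes "0 \<le> s" "s \<le> T" "\<omega> \<in> space M"
  shows "(\<lambda>u. indicator {0..s} u * Lam (T - u) (X (T - u) \<omega>)) \<in> borel_measurable lborel"
proof -
  have "(\<lambda>u. indicator {0..s} (snd (\<omega>, u)) * Lam (T - snd (\<omega>, u)) (X (T - snd (\<omega>, u)) (fst (\<omega>, u)))) \<in> borel_measurable lborel"
    using measurable_compose[OF measurable_Pair1'[of \<omega> "G s" lborel] jmG[OF assms(1,2)]] assms(3) space_G by simp
  then show ?thesis by simp
qed

lemma path_int: assumes "0 \<le> s" "s \<le> T" "\<omega> \<in> space M"
  shows "set_integrable lborel {0..s} (\<lambda>u. Lam (T - u) (X (T - u) \<omega>))"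
proof -
  obtain B where B: "0 \<le> B" "\<And>v w. 0 \<le> v \<Longrightarrow> v \<le> T \<Longrightarrow> \<bar>Lam v w\<bar> \<le> B" using Lam_bound by blast
  have "integrable lborel (indicat_real {0..s})"
    by (rule integrable_real_indicator) (auto simp: emeasure_lborel_Icc_eq)
  then have i: "integrable lborel (\<lambda>u. indicator {0..s} u * B)" by (rule integrable_mult_left)
  have ae: "AE u in lborel. norm (indicator {0..s} u * Lam (T - u) (X (T - u) \<omega>)) \<le> norm (indicator {0..s} u * B)"
    using B assms by (intro AE_I2) (auto simp: indicator_def)
  have "integrable lborel (\<lambda>u. indicator {0..s} u * Lam (T - u) (X (T - u) \<omega>))"
    by (rule Bochner_Integration.integrable_bound[OF i path_meas[OF assms] ae])
  then show ?thesis unfolding set_integrable_def by simp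
qed

end

context mart
begin

lemma Yint_meas_G: assumes "0 \<le> s" "s \<le> T"
  shows "(\<lambda>\<omega>. LINT u:{0..s}|lborel. Lam (T - u) (X (T - u) \<omega>)) \<in> borel_measurable (G s)"
proof -
  have "case_prod (\<lambda>\<omega> u. indicator {0..s} u * Lam (T - u) (X (T - u) \<omega>)) \<in> borel_measurable (G s \<Otimes>\<^sub>M lborel)"
    using jmG[OF assms] by (simp add: case_prod_beta')
  then have "(\<lambda>\<omega>. \<integral>u. indicator {0..s} u * Lam (T - u) (X (T - u) \<omega>) \<partial>lborel) \<in> borel_measurable (G s)"
    by (rule lborel.borel_measurable_lebesgue_integral)
  then show ?thesis unfolding set_lebesgue_integral_def by simp
qed

lemma XT_meas_G: assumes "0 \<le> s" "s \<le> T" shows "X (T - s) \<in> measurable (G s) (count_space UNIV)"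
  by (rule X_meas_F[OF space_G]) (rule ev_G, use assms in auto)

lemma Phi_meas_G: assumes "0 \<le> s" "s \<le> T" shows "(\<lambda>\<omega>. Phi (T - s) (X (T - s) \<omega>)) \<in> borel_measurable (G s)"
proof -
  have "(\<lambda>x. Phi (T - s) x) \<in> borel_measurable (count_space UNIV)" by simp
  then show ?thesis by (rule measurable_compose[OF XT_meas_G[OF assms]])
qed

lemma Y_meas_G: assumes "0 \<le> s" "s \<le> T" shows "Y s \<in> borel_measurable (G s)"
  unfolding Y_def[abs_def] by (intro borel_measurable_diff Phi_meas_G Yint_meas_G assms)

lemma Y_meas_nu: assumes "0 \<le> s" "s \<le> T" shows "Y s \<in> borel_measurable nu"
  by (rule measurable_from_subalg[OF subalg Y_meas_G[OF assms]])

lemma path_bound: assumes "0 \<le> s" "s \<le> T" "\<omega> \<in> space M"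
    and B: "0 \<le> B" "\<And>v w. 0 \<le> v \<Longrightarrow> v \<le> T \<Longrightarrow> \<bar>Lam v w\<bar> \<le> B"
  shows "\<bar>LINT u:{0..s}|lborel. Lam (T - u) (X (T - u) \<omega>)\<bar> \<le> B * s"
proof -
  have si: "set_integrable lborel {0..s} (\<lambda>u. Lam (T - u) (X (T - u) \<omega>))" by (rule path_int[OF assms(1-3)])
  have sc: "set_integrable lborel {0..s} (\<lambda>u. B)"
    unfolding set_integrable_def
    by (intro integrable_scaleR_left integrable_real_indicator) (auto simp: emeasure_lborel_Icc_eq)
  have "\<bar>LINT u:{0..s}|lborel. Lam (T - u) (X (T - u) \<omega>)\<bar> \<le> (LINT u:{0..s}|lborel. norm (Lam (T - u) (X (T - u) \<omega>)))"
    using set_integral_norm_bound[OF si] by simp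
  also have "\<dots> \<le> (LINT u:{0..s}|lborel. B)"
  proof (rule set_integral_mono)
    show "set_integrable lborel {0..s} (\<lambda>u. norm (Lam (T - u) (X (T - u) \<omega>)))"
      using set_integrable_abs[OF si] by simp
    show "set_integrable lborel {0..s} (\<lambda>u. B)" by (rule sc)
    fix u assume "u \<in> {0..s}"
    then show "norm (Lam (T - u) (X (T - u) \<omega>)) \<le> B" using B assms by auto
  qed
  also have "\<dots> = B * s" using assms by (subst set_integral_const) (auto simp: measure_def emeasure_lborel_Icc_eq)
  finally show ?thesis .
qed

lemma Y_int: assumes "0 \<le> s" "s \<le> T" shows "integrable nu (Y s)"
proof -
  obtain B where B: "0 \<le> B" "\<And>v w. 0 \<le> v \<Longrightarrow> v \<le> T \<Longrightarrow> \<bar>Lam v w\<bar> \<le> B" using Lam_bound by blast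
  define C where "C = (\<Sum>w\<in>UNIV. \<bar>Phi (T - s) w\<bar>) + B * s"
  have "AE \<omega> in nu. norm (Y s \<omega>) \<le> C"
  proof (rule AE_I2)
    fix \<omega> assume w: "\<omega> \<in> space nu"
    then have w': "\<omega> \<in> space M" using nu_space by simp
    have "\<bar>Phi (T - s) (X (T - s) \<omega>)\<bar> \<le> (\<Sum>w\<in>UNIV. \<bar>Phi (T - s) w\<bar>)" by (rule member_le_sum) auto
    moreover have "\<bar>LINT u:{0..s}|lborel. Lam (T - u) (X (T - u) \<omega>)\<bar> \<le> B * s" by (rule path_bound[OF assms w' B])
    ultimately show "norm (Y s \<omega>) \<le> C" unfolding Y_def C_def by simp
  qed
  then show ?thesis by (rule nu.integrable_const_bound) (rule Y_meas_nu[OF assms])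
qed

lemma Y_split: assumes "0 \<le> s" "s \<le> t" "t \<le> T" "\<omega> \<in> space M"
  shows "Y t \<omega> - Y s \<omega> = Phi (T - t) (X (T - t) \<omega>) - Phi (T - s) (X (T - s) \<omega>)
     - (LINT u:{s<..t}|lborel. Lam (T - u) (X (T - u) \<omega>))"
proof -
  have it: "set_integrable lborel {0..t} (\<lambda>u. Lam (T - u) (X (T - u) \<omega>))" using assms by (intro path_int) auto
  have "(LINT u:{0..s}\<union>{s<..t}|lborel. Lam (T - u) (X (T - u) \<omega>))
      = (LINT u:{0..s}|lborel. Lam (T - u) (X (T - u) \<omega>)) + (LINT u:{s<..t}|lborel. Lam (T - u) (X (T - u) \<omega>))"
  proof (rule set_integral_Un)
    show "set_integrable lborel {0..s} (\<lambda>u. Lam (T - u) (X (T - u) \<omega>))"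
      by (rule set_integrable_subset[OF it]) (use assms in auto)
    show "set_integrable lborel {s<..t} (\<lambda>u. Lam (T - u) (X (T - u) \<omega>))"
      by (rule set_integrable_subset[OF it]) (use assms in auto)
  qed auto
  moreover have "{0..s}\<union>{s<..t} = {0..t}" using assms by auto
  ultimately show ?thesis unfolding Y_def by simp
qed

end

context mart
begin

lemma fub:
  assumes A: "A \<in> sets M" and st: "0 \<le> s" "s \<le> t" "t \<le> T"
  shows "(\<integral>\<omega>. indicator A \<omega> * (LINT u:{s<..t}|lborel. Lam (T - u) (X (T - u) \<omega>)) \<partial>nu)
       = (LINT u:{s<..t}|lborel. (\<integral>\<omega>. indicator A \<omega> * Lam (T - u) (X (T - u) \<omega>) \<partial>nu))"
proof -
  interpret p: pair_sigma_finite nu lborel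
    by (intro pair_sigma_finite.intro nu.sigma_finite_measure_axioms lborel.sigma_finite_measure_axioms)
  obtain B where B: "0 \<le> B" "\<And>v w. 0 \<le> v \<Longrightarrow> v \<le> T \<Longrightarrow> \<bar>Lam v w\<bar> \<le> B" using Lam_bound by blast
  define h where "h p = indicator A (fst p) * (indicator {s<..t} (snd p) * Lam (T - snd p) (X (T - snd p) (fst p)))" for p
  have A': "A \<in> sets nu" using A nu_sets by simp
  have heq: "h = (\<lambda>p. (indicator A (fst p) * indicator {s<..t} (snd p)) * (indicator {0..t} (snd p) * Lam (T - snd p) (X (T - snd p) (fst p))))"
    using st by (auto simp: h_def fun_eq_iff indicator_def)
  have i1: "(\<lambda>p. indicator A (fst p) :: real) \<in> borel_measurable (nu \<Otimes>\<^sub>M lborel)"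
    by (rule measurable_compose[OF measurable_fst borel_measurable_indicator[OF A']])
  have i2: "(\<lambda>p. indicator {s<..t} (snd p) :: real) \<in> borel_measurable (nu \<Otimes>\<^sub>M lborel)"
    by (rule measurable_compose[OF measurable_snd borel_measurable_indicator]) simp
  have hm: "h \<in> borel_measurable (nu \<Otimes>\<^sub>M lborel)"
    unfolding heq by (intro borel_measurable_times i1 i2 jmM) (use st in auto)
  have hb: "\<bar>h (\<omega>, u)\<bar> \<le> indicator {s<..t} u * B" if "\<omega> \<in> space nu" for \<omega> u
    using B st unfolding h_def by (auto simp: indicator_def abs_mult)
  have iB: "integrable lborel (\<lambda>u. indicator {s<..t} u * B)"
    by (intro integrable_mult_left integrable_real_indicator) (use st in auto)
  have hi2: "integrable lborel (\<lambda>u. h (\<omega>, u))" if w: "\<omega> \<in> space nu" for \<omega>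
  proof (rule Bochner_Integration.integrable_bound[OF iB])
    show "(\<lambda>u. h (\<omega>, u)) \<in> borel_measurable lborel"
      using measurable_compose[OF measurable_Pair1'[OF w] hm] by simp
    show "AE u in lborel. norm (h (\<omega>, u)) \<le> norm (indicator {s<..t} u * B)"
      using hb[OF w] B by (intro AE_I2) (auto simp: indicator_def)
  qed
  have hi1: "integrable nu (\<lambda>\<omega>. \<integral>u. norm (h (\<omega>, u)) \<partial>lborel)"
  proof (rule nu.integrable_const_bound[where B="B * (t - s)"])
    show "(\<lambda>\<omega>. \<integral>u. norm (h (\<omega>, u)) \<partial>lborel) \<in> borel_measurable nu"
    proof (rule lborel.borel_measurable_lebesgue_integral)
      show "case_prod (\<lambda>\<omega> u. norm (h (\<omega>, u))) \<in> borel_measurable (nu \<Otimes>\<^sub>M lborel)"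
        using measurable_compose[OF hm borel_measurable_norm] by (simp add: case_prod_beta')
    qed
    show "AE \<omega> in nu. norm (\<integral>u. norm (h (\<omega>, u)) \<partial>lborel) \<le> B * (t - s)"
    proof (rule AE_I2)
      fix \<omega> assume w: "\<omega> \<in> space nu"
      have "(\<integral>u. norm (h (\<omega>, u)) \<partial>lborel) \<le> (\<integral>u. indicator {s<..t} u * B \<partial>lborel)"
        by (rule integral_mono[OF integrable_norm[OF hi2[OF w]] iB]) (use hb[OF w] in simp)
      also have "\<dots> = B * (t - s)" using st by (simp add: measure_def)
      finally show "norm (\<integral>u. norm (h (\<omega>, u)) \<partial>lborel) \<le> B * (t - s)" by simp
    qed
  qed
  have hint: "integrable (nu \<Otimes>\<^sub>M lborel) h"
    by (rule p.Fubini_integrable[OF hm hi1]) (rule AE_I2, rule hi2)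
  have fu: "(\<integral>u. (\<integral>\<omega>. h (\<omega>, u) \<partial>nu) \<partial>lborel) = (\<integral>\<omega>. (\<integral>u. h (\<omega>, u) \<partial>lborel) \<partial>nu)"
    by (rule p.Fubini_integral) (simp add: hint)
  have l: "(\<integral>u. h (\<omega>, u) \<partial>lborel) = indicator A \<omega> * (LINT u:{s<..t}|lborel. Lam (T - u) (X (T - u) \<omega>))" for \<omega>
    unfolding h_def set_lebesgue_integral_def by simp
  have r: "(\<integral>\<omega>. h (\<omega>, u) \<partial>nu) = indicator {s<..t} u * (\<integral>\<omega>. indicator A \<omega> * Lam (T - u) (X (T - u) \<omega>) \<partial>nu)" for u
  proof -
    have "(\<integral>\<omega>. h (\<omega>, u) \<partial>nu) = (\<integral>\<omega>. indicator {s<..t} u * (indicator A \<omega> * Lam (T - u) (X (T - u) \<omega>)) \<partial>nu)"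
      unfolding h_def by (simp add: mult_ac)
    then show ?thesis by simp
  qed
  show ?thesis using fu unfolding l r set_lebesgue_integral_def by simp
qed

end

context mart
begin

lemma ftc:
  assumes st: "0 \<le> s" "s \<le> t" "t \<le> T"
  shows "(LINT u:{s<..t}|lborel. Kf b x (T - u)) = Jf b x (T - t) - Jf b x (T - s)"
proof -
  have mm: "min s t = s" "max s t = t" using st by auto
  have c: "continuous_on {min s t..max s t} (\<lambda>u. Kf b x (T - u))"
  proof -
    have "continuous_on {s..t} (\<lambda>u. T - u)" by (intro continuous_intros)
    moreover have "(\<lambda>u. T - u) ` {s..t} \<subseteq> {0..T}" using st by auto
    moreover have "continuous_on {0..T} (\<lambda>v. Kf b x v)" by (rule Kf_cont) auto
    ultimately have "continuous_on {s..t} (\<lambda>u. Kf b x (T - u))" by (rule continuous_on_compose2[rotated])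
    then show ?thesis unfolding mm .
  qed
  have d: "((\<lambda>u. Jf b x (T - u)) has_vector_derivative Kf b x (T - u)) (at u within {min s t..max s t})"
    if u: "min s t \<le> u" "u \<le> max s t" for u
  proof -
    have d1: "((\<lambda>u. T - u) has_real_derivative -1) (at u within {min s t..max s t})"
      by (auto intro!: derivative_eq_intros)
    have "0 \<le> T - u" using u st unfolding mm by linarith
    then have "((\<lambda>u. Jf b x (T - u)) has_real_derivative (- Kf b x (T - u)) * (-1)) (at u within {min s t..max s t})"
      by (rule DERIV_chain'[OF d1 J_deriv])
    then show ?thesis unfolding has_real_derivative_iff_has_vector_derivative by simp
  qed
  have "(LBINT u=s..t. Kf b x (T - u)) = Jf b x (T - t) - Jf b x (T - s)"
    by (rule interval_integral_FTC_finite[OF c d])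
  moreover have "(LBINT u=s..t. Kf b x (T - u)) = (LBINT u:{s<..t}. Kf b x (T - u))"
    by (rule interval_integral_Ioc) (use st in simp)
  ultimately show ?thesis by simp
qed

lemma Kf_setint: assumes st: "0 \<le> s" "s \<le> t" "t \<le> T"
  shows "set_integrable lborel {s<..t} (\<lambda>u. Kf b x (T - u))"
proof -
  have "continuous_on {s..t} (\<lambda>u. Kf b x (T - u))"
  proof -
    have "continuous_on {s..t} (\<lambda>u. T - u)" by (intro continuous_intros)
    moreover have "(\<lambda>u. T - u) ` {s..t} \<subseteq> {0..T}" using st by auto
    moreover have "continuous_on {0..T} (\<lambda>v. Kf b x v)" by (rule Kf_cont) auto
    ultimately show ?thesis by (rule continuous_on_compose2[rotated])
  qed
  then have "set_integrable lborel {s..t} (\<lambda>u. Kf b x (T - u))"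
    unfolding set_integrable_def by (intro borel_integrable_compact) auto
  then show ?thesis by (rule set_integrable_subset) auto
qed

definition As :: "(real \<times> 's) set \<Rightarrow> 'w set" where
  "As S = {\<omega>\<in>space M. \<forall>p\<in>S. X (T - fst p) \<omega> = snd p}"

lemma As_sets: "finite S \<Longrightarrow> As S \<in> sets M"
proof -
  assume "finite S"
  have "As S = {\<omega>\<in>space M. \<forall>p\<in>(\<lambda>p. (T - fst p, snd p)) ` S. X (fst p) \<omega> = snd p}"
    unfolding As_def by auto
  then show ?thesis using cyl_sets \<open>finite S\<close> by simp
qed

lemma Phi_int: "integrable nu (\<lambda>\<omega>. indicator A \<omega> * Phi v (X v \<omega>))" if "A \<in> sets M"
proof (rule nu.integrable_const_bound[where B="\<Sum>w\<in>UNIV. \<bar>Phi v w\<bar>"])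
  show "AE \<omega> in nu. norm (indicator A \<omega> * Phi v (X v \<omega>)) \<le> (\<Sum>w\<in>UNIV. \<bar>Phi v w\<bar>)"
  proof (rule AE_I2)
    fix \<omega>
    have "\<bar>Phi v (X v \<omega>)\<bar> \<le> (\<Sum>w\<in>UNIV. \<bar>Phi v w\<bar>)" by (rule member_le_sum) auto
    then show "norm (indicator A \<omega> * Phi v (X v \<omega>)) \<le> (\<Sum>w\<in>UNIV. \<bar>Phi v w\<bar>)"
      by (auto simp: indicator_def abs_mult)
  qed
  have "(\<lambda>\<omega>. Phi v (X v \<omega>)) \<in> borel_measurable nu"
  proof -
    have "X v \<in> measurable nu (count_space UNIV)" using X_meas by (simp add: measurable_cong_sets[OF nu_sets refl])
    then show ?thesis by (rule measurable_compose) simp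
  qed
  moreover have "A \<in> sets nu" using that nu_sets by simp
  ultimately show "(\<lambda>\<omega>. indicator A \<omega> * Phi v (X v \<omega>)) \<in> borel_measurable nu"
    by (intro borel_measurable_times borel_measurable_indicator)
qed

end

context mart
begin

lemma lin_setint:
  fixes c :: "'s \<Rightarrow> real" and K :: "'s \<Rightarrow> real \<Rightarrow> real"
  assumes "\<And>x. set_integrable lborel A (K x)"
  shows "(LINT u:A|lborel. (\<Sum>x\<in>UNIV. c x * K x u)) = (\<Sum>x\<in>UNIV. c x * (LINT u:A|lborel. K x u))"
proof -
  have "(LINT u:A|lborel. (\<Sum>x\<in>UNIV. c x * K x u)) = (\<integral>u. (\<Sum>x\<in>UNIV. c x * (indicator A u *\<^sub>R K x u)) \<partial>lborel)"
    unfolding set_lebesgue_integral_def by (intro Bochner_Integration.integral_cong refl) (simp add: real_scaleR_def sum_distrib_left mult_ac)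
  also have "\<dots> = (\<Sum>x\<in>UNIV. \<integral>u. c x * (indicator A u *\<^sub>R K x u) \<partial>lborel)"
    by (rule Bochner_Integration.integral_sum) (rule integrable_mult_right, rule assms[unfolded set_integrable_def])
  also have "\<dots> = (\<Sum>x\<in>UNIV. c x * (LINT u:A|lborel. K x u))"
    unfolding set_lebesgue_integral_def by simp
  finally show ?thesis .
qed

lemma basic:
  assumes S: "finite S" "S \<subseteq> {0..s} \<times> UNIV" and st: "0 \<le> s" "s \<le> t" "t \<le> T"
  shows "(\<integral>\<omega>. indicator (As S) \<omega> * (Y t \<omega> - Y s \<omega>) \<partial>nu) = 0"
proof -
  define S2 where "S2 = (\<lambda>p. (T - fst p, snd p)) ` S"
  define a where "a = T - t"
  define b where "b = T - s"
  have ab: "0 \<le> a" "a \<le> b" "b \<le> T" unfolding a_def b_def using st by auto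
  have AS: "As S = {\<omega>\<in>space M. \<forall>p\<in>S2. X (fst p) \<omega> = snd p}" unfolding As_def S2_def by auto
  have S2f: "finite S2" unfolding S2_def using S by simp
  have S2b: "\<forall>p\<in>S2. b \<le> fst p" unfolding S2_def b_def using S by auto
  obtain c where c: "\<And>v z x. 0 \<le> v \<Longrightarrow> v \<le> b \<Longrightarrow>
     measure nu {\<omega>\<in>space M. X v \<omega> = z \<and> X b \<omega> = x \<and> (\<forall>p\<in>S2. X (fst p) \<omega> = snd p)} = rho v z * ptr (b - v) z x * c x"
    using cyl_factor[OF S2f S2b] by blast
  have EF: "(\<integral>\<omega>. indicator (As S) \<omega> * F (X v \<omega>) \<partial>nu) = (\<Sum>x\<in>UNIV. c x * (\<Sum>z\<in>UNIV. rho v z * F z * ptr (b - v) z x))"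
    if "0 \<le> v" "v \<le> b" for v F
    unfolding AS by (rule expect_factor[OF S2f S2b c that])
  have E1: "(\<integral>\<omega>. indicator (As S) \<omega> * Phi a (X a \<omega>) \<partial>nu) = (\<Sum>x\<in>UNIV. c x * Jf b x a)"
    unfolding EF[OF ab(1,2)] Jf_def using ab by (simp add: rhoPhi)
  have E2: "(\<integral>\<omega>. indicator (As S) \<omega> * Phi b (X b \<omega>) \<partial>nu) = (\<Sum>x\<in>UNIV. c x * Jf b x b)"
  proof -
    have b0: "0 \<le> b" using ab by linarith
    show ?thesis unfolding EF[OF b0 order_refl] Jf_def using ab b0 by (simp add: rhoPhi)
  qed
  have E3u: "(\<integral>\<omega>. indicator (As S) \<omega> * Lam (T - u) (X (T - u) \<omega>) \<partial>nu) = (\<Sum>x\<in>UNIV. c x * Kf b x (T - u))"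
    if u: "u \<in> {s<..t}" for u
  proof -
    have v: "0 \<le> T - u" "T - u \<le> b" "T - u \<le> T" using u st unfolding b_def by auto
    show ?thesis unfolding EF[OF v(1,2)] Kf_def using v by (simp add: rhoLam)
  qed
  have E3: "(LINT u:{s<..t}|lborel. (\<integral>\<omega>. indicator (As S) \<omega> * Lam (T - u) (X (T - u) \<omega>) \<partial>nu))
      = (\<Sum>x\<in>UNIV. c x * (Jf b x a - Jf b x b))"
  proof -
    have "(LINT u:{s<..t}|lborel. (\<integral>\<omega>. indicator (As S) \<omega> * Lam (T - u) (X (T - u) \<omega>) \<partial>nu))
        = (LINT u:{s<..t}|lborel. (\<Sum>x\<in>UNIV. c x * Kf b x (T - u)))"
      unfolding set_lebesgue_integral_def
    proof (intro Bochner_Integration.integral_cong refl)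
      fix u
      show "indicator {s<..t} u *\<^sub>R (\<integral>\<omega>. indicator (As S) \<omega> * Lam (T - u) (X (T - u) \<omega>) \<partial>nu)
          = indicator {s<..t} u *\<^sub>R (\<Sum>x\<in>UNIV. c x * Kf b x (T - u))"
        by (cases "u \<in> {s<..t}") (simp_all add: E3u)
    qed
    also have "\<dots> = (\<Sum>x\<in>UNIV. c x * (LINT u:{s<..t}|lborel. Kf b x (T - u)))"
      by (rule lin_setint) (rule Kf_setint[OF st])
    also have "\<dots> = (\<Sum>x\<in>UNIV. c x * (Jf b x a - Jf b x b))"
      unfolding ftc[OF st] a_def b_def ..
    finally show ?thesis .
  qed
  have AsM: "As S \<in> sets M" by (rule As_sets[OF S(1)])
  have AsN: "As S \<in> sets nu" using AsM nu_sets by simp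
  let ?I = "\<lambda>\<omega>. indicator (As S) \<omega> :: real"
  let ?L = "\<lambda>\<omega>. LINT u:{s<..t}|lborel. Lam (T - u) (X (T - u) \<omega>)"
  have pw: "?I \<omega> * (Y t \<omega> - Y s \<omega>) = ?I \<omega> * Phi a (X a \<omega>) - ?I \<omega> * Phi b (X b \<omega>) - ?I \<omega> * ?L \<omega>"
    if "\<omega> \<in> space nu" for \<omega>
    using Y_split[OF st, of \<omega>] that nu_space unfolding a_def b_def by (simp add: right_diff_distrib)
  have iY: "integrable nu (\<lambda>\<omega>. Y t \<omega> - Y s \<omega>)"
    using st by (intro Bochner_Integration.integrable_diff Y_int) auto
  have "integrable nu (\<lambda>\<omega>. indicator (As S) \<omega> *\<^sub>R (Y t \<omega> - Y s \<omega>))"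
    by (rule integrable_mult_indicator[OF AsN iY])
  then have iD: "integrable nu (\<lambda>\<omega>. ?I \<omega> * (Y t \<omega> - Y s \<omega>))" by simp
  have i1: "integrable nu (\<lambda>\<omega>. ?I \<omega> * Phi a (X a \<omega>))" by (rule Phi_int[OF AsM])
  have i2: "integrable nu (\<lambda>\<omega>. ?I \<omega> * Phi b (X b \<omega>))" by (rule Phi_int[OF AsM])
  have i3: "integrable nu (\<lambda>\<omega>. ?I \<omega> * ?L \<omega>)"
  proof -
    have "integrable nu (\<lambda>\<omega>. ?I \<omega> * Phi a (X a \<omega>) - ?I \<omega> * Phi b (X b \<omega>) - ?I \<omega> * (Y t \<omega> - Y s \<omega>))"
      using i1 i2 iD by auto
    moreover have "integrable nu (\<lambda>\<omega>. ?I \<omega> * Phi a (X a \<omega>) - ?I \<omega> * Phi b (X b \<omega>) - ?I \<omega> * (Y t \<omega> - Y s \<omega>))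
        = integrable nu (\<lambda>\<omega>. ?I \<omega> * ?L \<omega>)"
      by (rule Bochner_Integration.integrable_cong[OF refl]) (simp add: pw)
    ultimately show ?thesis by simp
  qed
  have "(\<integral>\<omega>. ?I \<omega> * (Y t \<omega> - Y s \<omega>) \<partial>nu) = (\<integral>\<omega>. ?I \<omega> * Phi a (X a \<omega>) - ?I \<omega> * Phi b (X b \<omega>) - ?I \<omega> * ?L \<omega> \<partial>nu)"
    by (rule Bochner_Integration.integral_cong[OF refl pw])
  also have "\<dots> = (\<integral>\<omega>. ?I \<omega> * Phi a (X a \<omega>) \<partial>nu) - (\<integral>\<omega>. ?I \<omega> * Phi b (X b \<omega>) \<partial>nu) - (\<integral>\<omega>. ?I \<omega> * ?L \<omega> \<partial>nu)"
    using i1 i2 i3 by simp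
  also have "(\<integral>\<omega>. ?I \<omega> * ?L \<omega> \<partial>nu) = (LINT u:{s<..t}|lborel. (\<integral>\<omega>. ?I \<omega> * Lam (T - u) (X (T - u) \<omega>) \<partial>nu))"
    by (rule fub[OF AsM st])
  finally show ?thesis unfolding E1 E2 E3 by (simp add: sum_subtractf right_diff_distrib)
qed

end

context mart
begin

lemmas basic_case = basic

lemma setint_eq:
  assumes st: "0 \<le> s" "s \<le> t" "t \<le> T" and A: "A \<in> sets (G s)"
  shows "(LINT \<omega>:A|nu. Y t \<omega>) = (LINT \<omega>:A|nu. Y s \<omega>)"
proof -
  define D where "D \<omega> = Y t \<omega> - Y s \<omega>" for \<omega>
  have iD: "integrable nu D" unfolding D_def using st by (intro Bochner_Integration.integrable_diff Y_int) auto
  define AA where "AA = {As S | S. finite S \<and> S \<subseteq> {0..s} \<times> UNIV}"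
  have AAM: "AA \<subseteq> sets M" unfolding AA_def using As_sets by auto
  have AAP: "AA \<subseteq> Pow (space M)" unfolding AA_def As_def by auto
  have Is: "Int_stable AA"
  proof (rule Int_stableI)
    fix a b assume "a \<in> AA" "b \<in> AA"
    then obtain S1 S2 where "a = As S1" "b = As S2" "finite S1" "S1 \<subseteq> {0..s} \<times> UNIV" "finite S2" "S2 \<subseteq> {0..s} \<times> UNIV"
      unfolding AA_def by auto
    moreover have "As S1 \<inter> As S2 = As (S1 \<union> S2)" unfolding As_def by auto
    ultimately show "a \<inter> b \<in> AA" unfolding AA_def by auto
  qed
  have gensAA: "gens s \<subseteq> AA"
  proof
    fix e assume "e \<in> gens s"
    then obtain u y where e: "e = {\<omega>\<in>space M. X (T - u) \<omega> = y}" "0 \<le> u" "u \<le> s" unfolding gens_def by auto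
    then have "e = As {(u,y)}" unfolding As_def by auto
    then show "e \<in> AA" unfolding AA_def using e by auto
  qed
  have Asig: "A \<in> sigma_sets (space M) AA"
    using A unfolding sets_G by (rule subsetD[OF sigma_sets_subseteq[OF gensAA]])
  have sigM: "sigma_sets (space M) AA \<subseteq> sets M" by (rule sets.sigma_sets_subset[OF AAM])
  have P: "(\<integral>\<omega>. indicator A \<omega> * D \<omega> \<partial>nu) = 0"
    using Is AAP Asig
  proof (induction rule: sigma_sets_induct_disjoint)
    case (basic B)
    then obtain S where "B = As S" "finite S" "S \<subseteq> {0..s} \<times> UNIV" unfolding AA_def by auto
    then show ?case unfolding D_def using basic_case[of S s t] st by simp
  next
    case empty
    then show ?case by simp
  next
    case (compl B)
    have BM: "B \<in> sets nu" using compl(1) sigM nu_sets by auto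
    have BS: "B \<subseteq> space M" using compl(1) AAP sigma_sets_into_sp by blast
    have sp: "(\<integral>\<omega>. indicator (space M) \<omega> * D \<omega> \<partial>nu) = 0"
    proof -
      have "As {} = space M" unfolding As_def by simp
      then show ?thesis using basic_case[of "{}" s t] st unfolding D_def by simp
    qed
    have spM: "space M \<in> sets nu" using nu_sets by simp
    have "(\<integral>\<omega>. indicator (space M - B) \<omega> * D \<omega> \<partial>nu)
        = (\<integral>\<omega>. indicator (space M) \<omega> * D \<omega> - indicator B \<omega> * D \<omega> \<partial>nu)"
      using BS by (intro Bochner_Integration.integral_cong refl) (auto simp: indicator_def)
    also have "\<dots> = (\<integral>\<omega>. indicator (space M) \<omega> * D \<omega> \<partial>nu) - (\<integral>\<omega>. indicator B \<omega> * D \<omega> \<partial>nu)"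
      using integrable_mult_indicator[OF spM iD] integrable_mult_indicator[OF BM iD] by simp
    finally show ?case using sp compl(2) by simp
  next
    case (union B)
    have BM: "\<And>i. B i \<in> sets nu" using union(2) sigM nu_sets by auto
    have "set_integrable nu (\<Union>i. B i) D"
      unfolding set_integrable_def by (rule integrable_mult_indicator[OF _ iD]) (use BM in auto)
    then have "(LINT \<omega>:(\<Union>i. B i)|nu. D \<omega>) = (\<Sum>i. (LINT \<omega>:(B i)|nu. D \<omega>))"
      using union(1) BM by (intro lebesgue_integral_countable_add) (auto simp: disjoint_family_on_def)
    also have "\<dots> = 0" using union(3) unfolding set_lebesgue_integral_def by simp
    finally show ?case unfolding set_lebesgue_integral_def by simp
  qed
  have AN: "A \<in> sets nu" using Asig sigM nu_sets by auto
  have i1: "set_integrable nu A (Y t)" unfolding set_integrable_def by (rule integrable_mult_indicator[OF AN Y_int]) (use st in auto)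
  have i2: "set_integrable nu A (Y s)" unfolding set_integrable_def by (rule integrable_mult_indicator[OF AN Y_int]) (use st in auto)
  have "(LINT \<omega>:A|nu. Y t \<omega> - Y s \<omega>) = 0" using P unfolding D_def set_lebesgue_integral_def by simp
  then show ?thesis using set_integral_diff(2)[OF i1 i2] by simp
qed

theorem mart_thm: "martingale_on nu G {0..T} Y"
  unfolding martingale_on_def
proof (intro conjI ballI impI)
  fix s assume s: "s \<in> {0..T}"
  show "subalgebra nu (G s)" by (rule subalg)
  show "Y s \<in> borel_measurable (G s)" using s by (intro Y_meas_G) auto
  show "integrable nu (Y s)" using s by (intro Y_int) auto
  fix t assume t: "t \<in> {0..T}"
  {
    assume "s \<le> t"
    then show "sets (G s) \<subseteq> sets (G t)" by (rule G_mono)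
  }
  assume st: "s \<le> t"
  have sfs: "sigma_finite_subalgebra nu (G s)"
    by (rule finite_measure_subalgebra_is_sigma_finite)
       (intro finite_measure_subalgebra.intro nu.finite_measure_axioms finite_measure_subalgebra_axioms.intro subalg)
  show "AE \<omega> in nu. real_cond_exp nu (G s) (Y t) \<omega> = Y s \<omega>"
  proof (rule sigma_finite_subalgebra.real_cond_exp_charact[OF sfs])
    fix A assume "A \<in> sets (G s)"
    then show "(LINT \<omega>:A|nu. Y t \<omega>) = (LINT \<omega>:A|nu. Y s \<omega>)" using s t st by (intro setint_eq) auto
  next
    show "integrable nu (Y t)" using t by (intro Y_int) auto
    show "integrable nu (Y s)" using s by (intro Y_int) auto
    show "Y s \<in> borel_measurable (G s)" using s by (intro Y_meas_G) auto
  qed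
qed

end

context ctmc
begin

lemma Ev_nonneg_cp: "sorted (0 # map fst tx) \<Longrightarrow> 0 \<le> cp ptr 0 m tx"
proof -
  assume st: "sorted (0 # map fst tx)"
  have "0 \<le> prob (Ev m tx)" by simp
  then have "0 \<le> mu m * cp ptr 0 m tx" using fdd[OF st] by simp
  moreover have "0 < mu m" using mupos by simp
  ultimately show ?thesis by (simp add: zero_le_mult_iff)
qed

definition Qm :: "'w measure" where "Qm = density M (\<lambda>\<omega>. ennreal (q (Z 0 \<omega>) / mu (Z 0 \<omega>)))"

lemma dens_meas: "(\<lambda>\<omega>. ennreal (q (Z 0 \<omega>) / mu (Z 0 \<omega>))) \<in> borel_measurable M"
proof -
  have "(\<lambda>x. ennreal (q x / mu x)) \<in> borel_measurable (count_space UNIV)" by simp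
  then show ?thesis by (rule measurable_compose[OF Zmeas])
qed

lemma Qm_Ev: "emeasure Qm (Ev m tx) = ennreal (q m / mu m * prob (Ev m tx))"
proof -
  have "emeasure Qm (Ev m tx) = (\<integral>\<^sup>+\<omega>. ennreal (q (Z 0 \<omega>) / mu (Z 0 \<omega>)) * indicator (Ev m tx) \<omega> \<partial>M)"
    unfolding Qm_def by (rule emeasure_density[OF dens_meas Ev_sets])
  also have "\<dots> = (\<integral>\<^sup>+\<omega>. ennreal (q m / mu m) * indicator (Ev m tx) \<omega> \<partial>M)"
    by (intro nn_integral_cong) (auto simp: indicator_def Ev_def)
  also have "\<dots> = ennreal (q m / mu m) * emeasure M (Ev m tx)"
    by (rule nn_integral_cmult_indicator[OF Ev_sets])
  also have "\<dots> = ennreal (q m / mu m) * ennreal (prob (Ev m tx))" by (simp add: emeasure_eq_measure)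
  also have "\<dots> = ennreal (q m / mu m * prob (Ev m tx))"
  proof (rule ennreal_mult[symmetric])
    have "0 < mu m" using mupos by simp
    then show "0 \<le> q m / mu m" using q_pos[of m] by simp
  qed simp
  finally show ?thesis .
qed

lemma Qm_sets: "sets Qm = sets M" unfolding Qm_def by simp

lemma Qm_prob: "prob_space Qm"
proof (rule prob_spaceI)
  have sp: "space Qm = (\<Union>m\<in>UNIV. Ev m [])" unfolding Qm_def Ev_def by auto
  have "emeasure Qm (\<Union>m\<in>UNIV. Ev m []) = (\<Sum>m\<in>UNIV. emeasure Qm (Ev m []))"
    by (rule sum_emeasure[symmetric]) (auto simp: Qm_sets disjoint_family_on_def Ev_def)
  also have "\<dots> = (\<Sum>m\<in>UNIV. ennreal (q m))"
  proof (intro sum.cong refl)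
    fix m
    have "prob (Ev m []) = mu m" using fdd[of "[]" m] by simp
    then show "emeasure Qm (Ev m []) = ennreal (q m)" unfolding Qm_Ev using mupos[rule_format, of m] by simp
  qed
  also have "\<dots> = ennreal (\<Sum>m\<in>UNIV. q m)" using q_pos by (intro sum_ennreal) (simp add: less_imp_le)
  also have "\<dots> = 1" using inv unfolding invariant_distribution_def by simp
  finally show "emeasure Qm (space Qm) = 1" unfolding sp .
qed

lemma Qm_Ev_measure: "sorted (0 # map fst tx) \<Longrightarrow> measure Qm (Ev m tx) = q m * cp ptr 0 m tx"
proof -
  assume st: "sorted (0 # map fst tx)"
  have "0 \<le> q m / mu m * prob (Ev m tx)" using q_pos[of m] mupos[rule_format, of m] by simp
  then have "measure Qm (Ev m tx) = q m / mu m * prob (Ev m tx)" unfolding measure_def Qm_Ev by simp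
  also have "\<dots> = q m * cp ptr 0 m tx" using fdd[OF st] mupos[rule_format, of m] by simp
  finally show ?thesis .
qed

end

theorem proposition7p2:
  fixes M :: "'w measure"
    and P :: "'s::finite \<Rightarrow> 's \<Rightarrow> real"
    and q mu :: "'s \<Rightarrow> real"
    and Z :: "nat \<Rightarrow> 'w \<Rightarrow> 's"
    and N :: "real \<Rightarrow> 'w \<Rightarrow> nat"
    and T :: real
  assumes "prob_space M"
    and "stochastic P" and "irreducible_chain P"
    and "invariant_distribution P q"
    and "\<forall>x. mu x > 0" and "(\<Sum>x\<in>UNIV. mu x) = 1"
    and "markov_chain M Z P mu"
    and "poisson_process1 M N"
    and "independent_processes M Z N"
    and "0 < T"
  defines "l \<equiv> ell M (ctchain Z N) q"
    and "Q \<equiv> density M (\<lambda>\<omega>. ennreal (q (Z 0 \<omega>) / mu (Z 0 \<omega>)))"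
    and "Xh \<equiv> (\<lambda>s. ctchain Z N (T - s))"
    and "G \<equiv> nat_filtration M (\<lambda>s. ctchain Z N (T - s))"
  shows "martingale_on Q G {0..T}
           (\<lambda>s \<omega>. l (T - s) (Xh s \<omega>) * ln (l (T - s) (Xh s \<omega>))
              - (LINT u:{0..s}|lborel. LambdaQ P q l (T - u) (Xh u \<omega>)))
         \<and> martingale_on M G {0..T}
           (\<lambda>s \<omega>. ln (l (T - s) (Xh s \<omega>))
              - (LINT u:{0..s}|lborel. LambdaP P q l (T - u) (Xh u \<omega>)))"
proof -
  have cc: "ctmc M P q mu Z N"
    using assms(1-9) by (intro ctmc.intro ctmc_axioms.intro) auto
  interpret c: ctmc M P q mu Z N by (rule cc)
  have lL: "\<And>v w. 0 \<le> v \<Longrightarrow> l v w = c.Lf v w" unfolding l_def by (rule c.ell_Lf)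
  have QQ: "Q = c.Qm" unfolding Q_def c.Qm_def ..
  have LPe: "\<And>v w. 0 \<le> v \<Longrightarrow> LambdaP P q l v w = LambdaP P q c.Lf v w"
    unfolding LambdaP_def using lL by simp
  have LQe: "\<And>v w. 0 \<le> v \<Longrightarrow> LambdaQ P q l v w = LambdaQ P q c.Lf v w"
    unfolding LambdaQ_def using lL LPe by simp
  have nQc: "ctmc_nu M P q mu Z N c.Qm q"
    by (intro ctmc_nu.intro ctmc_nu_axioms.intro cc c.Qm_prob c.Qm_sets c.Qm_Ev_measure)
  interpret nQ: ctmc_nu M P q mu Z N c.Qm q by (rule nQc)
  interpret mQ: mart M P q mu Z N c.Qm q T "\<lambda>v w. l v w * ln (l v w)" "\<lambda>v w. LambdaQ P q l v w"
  proof (intro mart.intro mart_axioms.intro nQc)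
    show "0 < T" by fact
    fix w
    have "continuous_on {0..T} (\<lambda>v. LambdaQ P q c.Lf v w)" by (rule c.LamQ_cont) auto
    then show "continuous_on {0..T} (\<lambda>v. LambdaQ P q l v w)"
      by (rule continuous_on_cong[THEN iffD1, rotated 2]) (auto simp: LQe)
  next
    fix v w assume v: "0 \<le> v" "v \<le> T"
    have r: "nQ.rho v w = q w" unfolding nQ.rho_eq[OF v(1)] using c.ptr_stationary[OF v(1)] by simp
    show "nQ.rho v w * (l v w * ln (l v w)) = c.gf v w" unfolding r c.gf_def lL[OF v(1)] by simp
    show "nQ.rho v w * LambdaQ P q l v w = q w * LambdaQ P q c.Lf v w" unfolding r LQe[OF v(1)] ..
  qed
  have nMc: "ctmc_nu M P q mu Z N M mu"
    by (intro ctmc_nu.intro ctmc_nu_axioms.intro cc assms(1) refl c.fdd)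
  interpret nM: ctmc_nu M P q mu Z N M mu by (rule nMc)
  interpret mM: mart M P q mu Z N M mu T "\<lambda>v w. ln (l v w)" "\<lambda>v w. LambdaP P q l v w"
  proof (intro mart.intro mart_axioms.intro nMc)
    show "0 < T" by fact
    fix w
    have "continuous_on {0..T} (\<lambda>v. LambdaP P q c.Lf v w)" by (rule c.LamP_cont) auto
    then show "continuous_on {0..T} (\<lambda>v. LambdaP P q l v w)"
      by (rule continuous_on_cong[THEN iffD1, rotated 2]) (auto simp: LPe)
  next
    fix v w assume v: "0 \<le> v" "v \<le> T"
    have r: "nM.rho v w = q w * c.Lf v w" unfolding nM.rho_eq[OF v(1)] c.qLf ..
    show "nM.rho v w * ln (l v w) = c.gf v w" unfolding r c.gf_def lL[OF v(1)] by simp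
    show "nM.rho v w * LambdaP P q l v w = q w * LambdaQ P q c.Lf v w"
      unfolding r LPe[OF v(1)] LambdaQ_def by simp
  qed
  have GG: "G = mQ.G" "G = mM.G" unfolding G_def mQ.G_def[abs_def] mM.G_def[abs_def] by simp_all
  have "martingale_on c.Qm mQ.G {0..T} mQ.Y" by (rule mQ.mart_thm)
  moreover have "martingale_on M mM.G {0..T} mM.Y" by (rule mM.mart_thm)
  ultimately show ?thesis unfolding QQ GG[symmetric] mQ.Y_def[abs_def] mM.Y_def[abs_def] Xh_def by simp
qed

end
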